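(* Let $n$ be a positive integer with $n \equiv 3 \pmod 6$ and \[n \notin \{9, 15, 21, 141, 153, 165, 177, 189, 231, 249, 261, 285, 351, 357\},\] and let $\rho$ be an integer with $1 \le \rho \le n/3$. Then there exists an $(n+\rho,4)$-packing with exactly $\rho n/3$ blocks in which the largest partial parallel class has size $\rho$.
   Context: For integers $v \ge k \ge 2$, a $(v,k)$-packing is a pair $(X,\mathcal{B})$ where $X$ is a set of $v$ points and $\mathcal{B}$ is a set of $k$-subsets of $X$ (blocks) such that every pair of distinct points lies in at most one block. A partial parallel class (PPC) is a set of pairwise disjoint blocks; its size is the number of blocks in it. "The largest PPC has size $\rho$" means that the packing contains a PPC of size $\rho$ but no PPC of size $\rho+1$. *)

theory Defs
  imports Main
begin

definition packing :: "nat \<Rightarrow> nat \<Rightarrow> 'a set \<Rightarrow> 'a set set \<Rightarrow> bool" where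
  "packing v k X B \<longleftrightarrow> finite X \<and> card X = v \<and>
     (\<forall>b\<in>B. b \<subseteq> X \<and> card b = k) \<and>
     (\<forall>x\<in>X. \<forall>y\<in>X. x \<noteq> y \<longrightarrow> card {b\<in>B. x \<in> b \<and> y \<in> b} \<le> 1)"

definition ppc :: "'a set set \<Rightarrow> 'a set set \<Rightarrow> bool" where
  "ppc B P \<longleftrightarrow> P \<subseteq> B \<and> (\<forall>b\<in>P. \<forall>c\<in>P. b \<noteq> c \<longrightarrow> b \<inter> c = {})"

definition largest_ppc :: "'a set set \<Rightarrow> nat \<Rightarrow> bool" where
  "largest_ppc B \<rho> \<longleftrightarrow> (\<exists>P. ppc B P \<and> card P = \<rho>) \<and>
     \<not> (\<exists>P. ppc B P \<and> card P = \<rho> + 1)"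

end

theory Submission
  imports Defs "HOL-Library.Product_Plus" "HOL-Number_Theory.Cong" "HOL-Library.Countable"
begin


lemma card_le1I: "(\<And>a b. a \<in> S \<Longrightarrow> b \<in> S \<Longrightarrow> a = b) \<Longrightarrow> finite S \<Longrightarrow> card S \<le> 1"
  by (simp add: card_le_Suc0_iff_eq)

lemma packing_from_classes:
  fixes N :: "'p set" and inf :: "'i \<Rightarrow> 'p" and cls :: "'i \<Rightarrow> 'p set set" and tv :: "'i \<Rightarrow> 'p set"
  assumes fN: "finite N" and cN: "card N = 3*m" and fI: "finite I" and cI: "card I = \<rho>"
    and injI: "inj_on inf I" and dI: "inf ` I \<inter> N = {}"
    and sub: "\<And>i T. i \<in> I \<Longrightarrow> T \<in> cls i \<Longrightarrow> T \<subseteq> N \<and> card T = 3"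
    and fc: "\<And>i. i \<in> I \<Longrightarrow> finite (cls i) \<and> card (cls i) = m"
    and dj: "\<And>i T T'. i \<in> I \<Longrightarrow> T \<in> cls i \<Longrightarrow> T' \<in> cls i \<Longrightarrow> T \<noteq> T' \<Longrightarrow> T \<inter> T' = {}"
    and pr: "\<And>i i' T T' x y. i \<in> I \<Longrightarrow> i' \<in> I \<Longrightarrow> T \<in> cls i \<Longrightarrow> T' \<in> cls i' \<Longrightarrow>
               x \<in> T \<Longrightarrow> x \<in> T' \<Longrightarrow> y \<in> T \<Longrightarrow> y \<in> T' \<Longrightarrow> x \<noteq> y \<Longrightarrow> i = i' \<and> T = T'"
    and tv1: "\<And>i. i \<in> I \<Longrightarrow> tv i \<in> cls i"
    and tv2: "\<And>i i'. i \<in> I \<Longrightarrow> i' \<in> I \<Longrightarrow> i \<noteq> i' \<Longrightarrow> tv i \<inter> tv i' = {}"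
  shows "\<exists>(X :: 'p set) B. packing (3*m + \<rho>) 4 X B \<and> finite B \<and> card B = \<rho> * m \<and> largest_ppc B \<rho>"
proof -
  define X where "X = N \<union> inf ` I"
  define S where "S = Sigma I cls"
  define bl where "bl = (\<lambda>(i,T). insert (inf i) T)"
  define B where "B = bl ` S"
  have notN: "\<And>i. i \<in> I \<Longrightarrow> inf i \<notin> N" using dI by blast
  have fS: "finite S" unfolding S_def using fI fc by auto
  have cS: "card S = \<rho> * m" unfolding S_def using fI fc cI
    by (simp add: card_SigmaI)
  have blk: "\<And>i T. i \<in> I \<Longrightarrow> T \<in> cls i \<Longrightarrow> inf ` I \<inter> insert (inf i) T = {inf i}"
    using sub notN by blast
  have injbl: "inj_on bl S"
  proof (rule inj_onI)
    fix a b assume a: "a \<in> S" and b: "b \<in> S" and e: "bl a = bl b"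
    obtain i T where aa: "a = (i,T)" "i \<in> I" "T \<in> cls i" using a unfolding S_def by auto
    obtain i' T' where bb: "b = (i',T')" "i' \<in> I" "T' \<in> cls i'" using b unfolding S_def by auto
    have e2: "insert (inf i) T = insert (inf i') T'" using e aa bb unfolding bl_def by simp
    have "{inf i} = {inf i'}" using blk[OF aa(2,3)] blk[OF bb(2,3)] e2 by simp
    hence ii: "i = i'" using injI aa bb by (simp add: inj_on_eq_iff)
    have "T = insert (inf i) T - {inf i}" using notN aa sub by blast
    also have "\<dots> = T'" using e2 ii notN bb sub by blast
    finally show "a = b" using aa bb ii by simp
  qed
  have cB: "card B = \<rho> * m" unfolding B_def using card_image[OF injbl] cS by simp
  have fB: "finite B" unfolding B_def using fS by simp
  have cX: "card X = 3*m + \<rho>" unfolding X_def using card_Un_disjoint[of N "inf ` I"] fN fI dI cN cI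
      card_image[OF injI] by auto
  have memB: "\<And>b. b \<in> B \<Longrightarrow> \<exists>i T. i \<in> I \<and> T \<in> cls i \<and> b = insert (inf i) T"
    unfolding B_def S_def bl_def by auto
  have pack: "packing (3*m + \<rho>) 4 X B"
    unfolding packing_def
  proof (intro conjI ballI impI)
    show "finite X" unfolding X_def using fN fI by simp
    show "card X = 3*m + \<rho>" by (rule cX)
  next
    fix b assume "b \<in> B"
    then obtain i T where it: "i \<in> I" "T \<in> cls i" "b = insert (inf i) T" using memB by blast
    show "b \<subseteq> X" using it sub[OF it(1,2)] notN[OF it(1)] unfolding X_def
      by auto
  next
    fix b assume "b \<in> B"
    then obtain i T where it: "i \<in> I" "T \<in> cls i" "b = insert (inf i) T" using memB by blast
    have "finite T" using sub[OF it(1,2)] by (metis card.infinite zero_neq_numeral)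
    then show "card b = 4" using it sub[OF it(1,2)] notN[OF it(1)]
      by (auto simp: card_insert_if)
  next
    fix x y assume x: "x \<in> X" and y: "y \<in> X" and xy: "x \<noteq> y"
    show "card {b \<in> B. x \<in> b \<and> y \<in> b} \<le> 1"
    proof (rule card_le1I)
      show "finite {b \<in> B. x \<in> b \<and> y \<in> b}" using fB by simp
    next
      fix a b assume a: "a \<in> {b \<in> B. x \<in> b \<and> y \<in> b}" and b: "b \<in> {b \<in> B. x \<in> b \<and> y \<in> b}"
      obtain i T where it: "i \<in> I" "T \<in> cls i" "a = insert (inf i) T" using a memB by blast
      obtain i' T' where it': "i' \<in> I" "T' \<in> cls i'" "b = insert (inf i') T'" using b memB by blast
      have TN: "T \<subseteq> N" "T' \<subseteq> N" using sub it it' by auto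
      show "a = b"
      proof (cases "x \<in> N \<and> y \<in> N")
        case True
        hence "x \<in> T" "y \<in> T" "x \<in> T'" "y \<in> T'" using a b it it' notN by auto
        with pr[OF it(1) it'(1) it(2) it'(2) _ _ _ _ xy] have "i = i' \<and> T = T'" by blast
        thus ?thesis using it it' by simp
      next
        case False
        then obtain z w where zw: "z \<notin> N" "z \<in> a" "z \<in> b" "w \<in> a" "w \<in> b" "z \<noteq> w"
          using a b xy by blast
        have "z = inf i" "z = inf i'" using zw TN it it' by auto
        hence ii: "i = i'" using injI it it' by (simp add: inj_on_eq_iff)
        have "w \<noteq> inf i" using zw \<open>z = inf i\<close> by simp
        hence "w \<in> T" "w \<in> T'" using zw it it' ii by auto
        hence "T = T'" using dj[OF it(1) it(2)] it'(2) ii by blast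
        thus ?thesis using it it' ii by simp
      qed
    qed
  qed
  have ppc1: "\<exists>P. ppc B P \<and> card P = \<rho>"
  proof -
    define P where "P = (\<lambda>i. insert (inf i) (tv i)) ` I"
    have "inj_on (\<lambda>i. insert (inf i) (tv i)) I"
    proof (rule inj_onI)
      fix i i' assume "i \<in> I" "i' \<in> I" "insert (inf i) (tv i) = insert (inf i') (tv i')"
      hence "inf i \<in> insert (inf i') (tv i')" by blast
      moreover have "inf i \<notin> tv i'" using sub[OF \<open>i' \<in> I\<close> tv1[OF \<open>i' \<in> I\<close>]] notN[OF \<open>i \<in> I\<close>] by blast
      ultimately show "i = i'" using injI \<open>i \<in> I\<close> \<open>i' \<in> I\<close> by (auto simp: inj_on_eq_iff)
    qed
    hence "card P = \<rho>" unfolding P_def using card_image cI by blast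
    moreover have "ppc B P" unfolding ppc_def
    proof (intro conjI ballI impI)
      show "P \<subseteq> B" unfolding P_def B_def S_def bl_def using tv1 by auto
    next
      fix b c assume "b \<in> P" "c \<in> P" "b \<noteq> c"
      then obtain i i' where "i \<in> I" "i' \<in> I" "b = insert (inf i) (tv i)" "c = insert (inf i') (tv i')"
        unfolding P_def by auto
      moreover have "i \<noteq> i'" using \<open>b \<noteq> c\<close> calculation by auto
      ultimately show "b \<inter> c = {}" using tv2 tv1 sub notN injI
        by (auto simp: inj_on_eq_iff) (blast+)
    qed
    ultimately show ?thesis by blast
  qed
  have ppc2: "\<not> (\<exists>P. ppc B P \<and> card P = \<rho> + 1)"
  proof
    assume "\<exists>P. ppc B P \<and> card P = \<rho> + 1"
    then obtain P where P: "ppc B P" "card P = \<rho> + 1" by blast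
    have "\<forall>b\<in>P. \<exists>i. i \<in> I \<and> inf i \<in> b" using P(1) memB unfolding ppc_def by blast
    then obtain f where f: "\<forall>b\<in>P. f b \<in> I \<and> inf (f b) \<in> b" by metis
    have "inj_on f P"
    proof (rule inj_onI)
      fix b c assume "b \<in> P" "c \<in> P" "f b = f c"
      hence "inf (f b) \<in> b \<inter> c" using f by auto
      thus "b = c" using P(1) \<open>b \<in> P\<close> \<open>c \<in> P\<close> unfolding ppc_def by blast
    qed
    hence "card P \<le> card I" using card_inj_on_le[of f P I] f fI by auto
    thus False using P cI by simp
  qed
  show ?thesis using pack fB cB ppc1 ppc2 unfolding largest_ppc_def by blast
qed



lemma ppc_image:
  fixes h :: "'p \<Rightarrow> 'q"
  assumes ih: "inj h"
  shows "ppc ((`) h ` B) P' \<longleftrightarrow> (\<exists>P. ppc B P \<and> P' = (`) h ` P)"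
proof
  assume a: "ppc ((`) h ` B) P'"
  define P where "P = {b \<in> B. h ` b \<in> P'}"
  have "P' = (`) h ` P" using a unfolding P_def ppc_def by auto
  moreover have "ppc B P" unfolding ppc_def
  proof (intro conjI ballI impI)
    show "P \<subseteq> B" unfolding P_def by auto
  next
    fix b c assume "b \<in> P" "c \<in> P" "b \<noteq> c"
    hence "h ` b \<noteq> h ` c" using ih by (simp add: inj_image_eq_iff)
    hence "h ` b \<inter> h ` c = {}" using a \<open>b \<in> P\<close> \<open>c \<in> P\<close> unfolding ppc_def P_def by auto
    thus "b \<inter> c = {}" by auto
  qed
  ultimately show "\<exists>P. ppc B P \<and> P' = (`) h ` P" by blast
next
  assume "\<exists>P. ppc B P \<and> P' = (`) h ` P"
  then obtain P where P: "ppc B P" "P' = (`) h ` P" by blast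
  show "ppc ((`) h ` B) P'" unfolding ppc_def
  proof (intro conjI ballI impI)
    show "P' \<subseteq> (`) h ` B" using P unfolding ppc_def by auto
  next
    fix b c assume "b \<in> P'" "c \<in> P'" "b \<noteq> c"
    then obtain b0 c0 where "b0 \<in> P" "c0 \<in> P" "b = h ` b0" "c = h ` c0" "b0 \<noteq> c0" using P by auto
    hence "b0 \<inter> c0 = {}" using P unfolding ppc_def by auto
    thus "b \<inter> c = {}" using \<open>b = h ` b0\<close> \<open>c = h ` c0\<close> ih by (auto simp: inj_eq)
  qed
qed

lemma transfer_inj:
  fixes h :: "'p \<Rightarrow> 'q"
  assumes ih: "inj h" and pk: "packing v k X B" and fB: "finite B" and lp: "largest_ppc B \<rho>"
  shows "packing v k (h ` X) ((`) h ` B) \<and> finite ((`) h ` B) \<and> card ((`) h ` B) = card B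
     \<and> largest_ppc ((`) h ` B) \<rho>"
proof -
  have ihs: "inj ((`) h)" using ih by (simp add: inj_image_eq_iff inj_def)
  have cB: "card ((`) h ` B) = card B" using ihs by (simp add: card_image inj_on_subset)
  have cardP: "\<And>P. card ((`) h ` P) = card P" using ihs by (simp add: card_image inj_on_subset)
  have "packing v k (h ` X) ((`) h ` B)" unfolding packing_def
  proof (intro conjI ballI impI)
    show "finite (h ` X)" using pk unfolding packing_def by simp
    show "card (h ` X) = v" using pk ih unfolding packing_def by (simp add: card_image inj_on_subset)
  next
    fix b assume "b \<in> (`) h ` B"
    then obtain b0 where "b0 \<in> B" "b = h ` b0" by auto
    thus "b \<subseteq> h ` X" using pk unfolding packing_def by auto
    show "card b = k" using pk ih \<open>b0 \<in> B\<close> \<open>b = h ` b0\<close> unfolding packing_def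
      by (simp add: card_image inj_on_subset)
  next
    fix x y assume "x \<in> h ` X" "y \<in> h ` X" "x \<noteq> y"
    then obtain x0 y0 where xy: "x0 \<in> X" "y0 \<in> X" "x = h x0" "y = h y0" "x0 \<noteq> y0" by auto
    have "{b \<in> (`) h ` B. x \<in> b \<and> y \<in> b} = (`) h ` {b \<in> B. x0 \<in> b \<and> y0 \<in> b}"
      using xy ih by (auto simp: inj_image_mem_iff inj_eq)
    hence "card {b \<in> (`) h ` B. x \<in> b \<and> y \<in> b} = card {b \<in> B. x0 \<in> b \<and> y0 \<in> b}"
      using cardP by simp
    thus "card {b \<in> (`) h ` B. x \<in> b \<and> y \<in> b} \<le> 1" using pk xy unfolding packing_def by auto
  qed
  moreover have "largest_ppc ((`) h ` B) \<rho>"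
    using lp unfolding largest_ppc_def ppc_image[OF ih] using cardP by metis
  ultimately show ?thesis using fB cB by simp
qed



type_synonym i3 = "int \<times> int \<times> int"

fun lin :: "i3 \<Rightarrow> i3 \<Rightarrow> i3" where
  "lin (c,a,b) (x,y,z) = (c*x, a*y - b*z, b*y + a*z)"

fun rz :: "int \<Rightarrow> int \<Rightarrow> i3 \<Rightarrow> bool" where
  "rz r t (x,y,z) \<longleftrightarrow> r dvd x \<and> t dvd y \<and> t dvd z"

fun nrm :: "int \<Rightarrow> int \<Rightarrow> i3 \<Rightarrow> i3" where
  "nrm r t (x,y,z) = (x mod r, y mod t, z mod t)"

definition Rs :: "int \<Rightarrow> int \<Rightarrow> i3 set" where
  "Rs r t = {(x,y,z). 0 \<le> x \<and> x < r \<and> 0 \<le> y \<and> y < t \<and> 0 \<le> z \<and> z < t}"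

fun unitk :: "i3 \<Rightarrow> bool" where
  "unitk (c,a,b) \<longleftrightarrow> c \<noteq> 0 \<and> c dvd 216 \<and> \<not> (3::int) dvd (a*a + b*b)"

lemma nrm_eq_iff: "nrm r t u = nrm r t v \<longleftrightarrow> rz r t (u - v)"
  by (cases u; cases v) (simp add: mod_eq_dvd_iff)

lemma rz_add: "rz r t u \<Longrightarrow> rz r t v \<Longrightarrow> rz r t (u + v)"
  by (cases u; cases v) auto
lemma rz_diff: "rz r t u \<Longrightarrow> rz r t v \<Longrightarrow> rz r t (u - v)"
  by (cases u; cases v) auto
lemma rz_neg: "rz r t (- u) \<longleftrightarrow> rz r t u"
  by (cases u) auto
lemma rz_zero: "rz r t 0"
  by (simp add: zero_prod_def)

lemma lin_diff_left: "lin (k1 - k2) j = lin k1 j - lin k2 j"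
  by (cases k1; cases k2; cases j) (simp add: algebra_simps)
lemma lin_add_right: "lin k (j1 + j2) = lin k j1 + lin k j2"
  by (cases k; cases j1; cases j2) (simp add: algebra_simps)
lemma lin_diff_right: "lin k (j1 - j2) = lin k j1 - lin k j2"
  by (cases k; cases j1; cases j2) (simp add: algebra_simps)
lemma lin_neg_right: "lin k (- j) = - lin k j"
  by (cases k; cases j) (simp add: algebra_simps)
lemma dvd_small: "0 \<le> (x::int) \<Longrightarrow> x < r \<Longrightarrow> r dvd x \<Longrightarrow> x = 0"
  using zdvd_imp_le by fastforce
lemma lin_neg_left: "lin (- k) j = lin k (- j)"
  by (cases k; cases j) (simp add: algebra_simps)

lemma cancel:
  assumes ur: "\<And>c. c dvd 216 \<Longrightarrow> coprime c r" and ut: "\<And>N. \<not> 3 dvd N \<Longrightarrow> coprime N t"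
    and uk: "unitk k" and h: "rz r t (lin k d)"
  shows "rz r t d"
proof -
  obtain c a b where k: "k = (c,a,b)" by (cases k)
  obtain x y z where d: "d = (x,y,z)" by (cases d)
  have h1: "r dvd c*x" "t dvd a*y - b*z" "t dvd b*y + a*z" using h k d by auto
  have cr: "coprime c r" using uk k ur by auto
  have n3: "\<not> 3 dvd (a*a+b*b)" using uk k by auto
  have ct: "coprime (a*a+b*b) t" using ut[OF n3] .
  have "r dvd x" using h1(1) cr by (simp add: coprime_commute coprime_dvd_mult_right_iff)
  moreover have "t dvd (a*a+b*b)*y"
  proof -
    have "(a*a+b*b)*y = a*(a*y - b*z) + b*(b*y + a*z)" by (simp add: algebra_simps)
    thus ?thesis using h1 by (metis dvd_add dvd_mult)
  qed
  hence "t dvd y" using ct by (simp add: coprime_commute coprime_dvd_mult_right_iff)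
  moreover have "t dvd (a*a+b*b)*z"
  proof -
    have "(a*a+b*b)*z = a*(b*y + a*z) - b*(a*y - b*z)" by (simp add: algebra_simps)
    thus ?thesis using h1 by (metis dvd_diff dvd_mult)
  qed
  hence "t dvd z" using ct by (simp add: coprime_commute coprime_dvd_mult_right_iff)
  ultimately show ?thesis using d by simp
qed

lemma Rs_eq:
  assumes "u \<in> Rs r t" "v \<in> Rs r t" "rz r t (u - v)" shows "u = v"
proof -
  have "nrm r t u = u" "nrm r t v = v" using assms(1,2) unfolding Rs_def by auto
  thus ?thesis using assms(3) nrm_eq_iff by metis
qed

lemma nrm_Rs: "r > 0 \<Longrightarrow> t > 0 \<Longrightarrow> nrm r t u \<in> Rs r t"
  by (cases u) (auto simp: Rs_def)

lemma nrm_id: "u \<in> Rs r t \<Longrightarrow> nrm r t u = u"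
  by (auto simp: Rs_def)

lemma rz_nrm: "rz r t (nrm r t u - u)"
  by (cases u) (auto simp: mod_eq_dvd_iff[symmetric])

lemma card_Rs: "r > 0 \<Longrightarrow> t > 0 \<Longrightarrow> card (Rs r t) = nat r * nat t * nat t"
proof -
  assume "r > 0" "t > 0"
  have "Rs r t = {0..<r} \<times> {0..<t} \<times> {0..<t}" unfolding Rs_def by auto
  thus ?thesis by (simp add: card_cartesian_product)
qed



type_synonym pnt = "(int \<times> i3) \<times> int"
type_synonym cov = "int \<times> int \<times> i3"

fun pt :: "int \<Rightarrow> int \<Rightarrow> cov \<Rightarrow> i3 \<Rightarrow> pnt" where
  "pt r t (e,l,k) j = ((e, nrm r t (lin k j)), l)"

definition htri :: "int \<Rightarrow> int \<Rightarrow> cov list \<Rightarrow> i3 \<Rightarrow> pnt set" where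
  "htri r t A j = (\<lambda>u. pt r t u j) ` set A"

fun spt :: "int \<times> int \<Rightarrow> pnt" where
  "spt (e,l) = ((e,(0,0,0)),l)"

fun lexlt :: "i3 \<Rightarrow> i3 \<Rightarrow> bool" where
  "lexlt (x,y,z) (x',y',z') \<longleftrightarrow> x < x' \<or> (x = x' \<and> (y < y' \<or> (y = y' \<and> z < z')))"

definition rneg :: "int \<Rightarrow> int \<Rightarrow> i3 \<Rightarrow> i3" where
  "rneg r t w = nrm r t (- w)"

definition Hs :: "int \<Rightarrow> int \<Rightarrow> i3 set" where
  "Hs r t = {w \<in> Rs r t. w \<noteq> (0,0,0) \<and> lexlt w (rneg r t w)}"

definition Cs :: "int \<Rightarrow> int \<Rightarrow> cov list list \<Rightarrow> (int \<times> int) list list \<Rightarrow> pnt set set" where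
  "Cs r t HT SP = (\<Union>A\<in>set HT. htri r t A ` Hs r t) \<union> ((\<lambda>S. spt ` set S) ` set SP)"

definition Gs :: "int \<Rightarrow> int \<Rightarrow> int \<Rightarrow> (int \<times> i3) set" where
  "Gs q r t = {0..<q} \<times> Rs r t"

fun gadd :: "int \<Rightarrow> int \<Rightarrow> int \<Rightarrow> int \<times> i3 \<Rightarrow> int \<times> i3 \<Rightarrow> int \<times> i3" where
  "gadd q r t (e,w) (e',w') = ((e+e') mod q, nrm r t (w + w'))"

fun gsub :: "int \<Rightarrow> int \<Rightarrow> int \<Rightarrow> int \<times> i3 \<Rightarrow> int \<times> i3 \<Rightarrow> int \<times> i3" where
  "gsub q r t (e,w) (e',w') = ((e-e') mod q, nrm r t (w - w'))"

fun tr :: "int \<Rightarrow> int \<Rightarrow> int \<Rightarrow> int \<times> i3 \<Rightarrow> pnt \<Rightarrow> pnt" where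
  "tr q r t d (g,l) = (gadd q r t g d, l)"

definition Ns :: "int \<Rightarrow> int \<Rightarrow> int \<Rightarrow> pnt set" where
  "Ns q r t = Gs q r t \<times> {0,1,2}"

lemma lexlt_asym: "lexlt u v \<Longrightarrow> lexlt v u \<Longrightarrow> False"
  by (cases u; cases v) auto
lemma lexlt_total: "u \<noteq> v \<Longrightarrow> lexlt u v \<or> lexlt v u"
  by (cases u; cases v) auto

locale cons =
  fixes q r t :: int and HT :: "cov list list" and SP :: "(int \<times> int) list list"
  assumes qp: "q > 0" and rp: "r > 0" and tp: "t > 0"
   and ur: "\<And>c. c dvd 216 \<Longrightarrow> coprime c r"
   and ut: "\<And>N. \<not> 3 dvd N \<Longrightarrow> coprime N t"
   and d_range: "\<And>A e l k. A \<in> set HT \<Longrightarrow> (e,l,k) \<in> set A \<Longrightarrow> 0 \<le> e \<and> e < q \<and> l \<in> {0,1,2}"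
   and s_range: "\<And>S e l. S \<in> set SP \<Longrightarrow> (e,l) \<in> set S \<Longrightarrow> 0 \<le> e \<and> e < q \<and> l \<in> {0,1,2}"
   and d_len: "\<And>A. A \<in> set HT \<Longrightarrow> length A = 3 \<and> distinct (map (\<lambda>(e,l,k). (e,l)) A)"
   and s_len: "\<And>S. S \<in> set SP \<Longrightarrow> length S = 3 \<and> distinct S"
   and d_unit: "\<And>A e l k. A \<in> set HT \<Longrightarrow> (e,l,k) \<in> set A \<Longrightarrow> unitk k"
   and d_unit2: "\<And>A e l k e' l' k'. A \<in> set HT \<Longrightarrow> (e,l,k) \<in> set A \<Longrightarrow> (e',l',k') \<in> set A \<Longrightarrow>
          (e,l) \<noteq> (e',l') \<Longrightarrow> unitk (k' - k)"
   and d_slot: "\<And>A B e l k k'. A \<in> set HT \<Longrightarrow> B \<in> set HT \<Longrightarrow> (e,l,k) \<in> set A \<Longrightarrow> (e,l,k') \<in> set B \<Longrightarrow>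
          A = B \<or> k' = - k"
   and d_pair: "\<And>A B e1 l1 k1 e2 l2 k2 e1' k1' e2' k2'. A \<in> set HT \<Longrightarrow> B \<in> set HT \<Longrightarrow>
          (e1,l1,k1) \<in> set A \<Longrightarrow> (e2,l2,k2) \<in> set A \<Longrightarrow> (e1',l1,k1') \<in> set B \<Longrightarrow> (e2',l2,k2') \<in> set B \<Longrightarrow>
          (e1,l1) \<noteq> (e2,l2) \<Longrightarrow> q dvd (e2 - e1 - (e2' - e1')) \<Longrightarrow>
          (A = B \<and> e1 = e1' \<and> k1 = k1' \<and> e2 = e2' \<and> k2 = k2') \<or> k2' - k1' = - (k2 - k1)"
   and s_pair: "\<And>S S' e1 l1 e2 l2 e1' e2' d. S \<in> set SP \<Longrightarrow> S' \<in> set SP \<Longrightarrow> (e1,l1) \<in> set S \<Longrightarrow> (e2,l2) \<in> set S \<Longrightarrow>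
          (e1',l1) \<in> set S' \<Longrightarrow> (e2',l2) \<in> set S' \<Longrightarrow> (e1,l1) \<noteq> (e2,l2) \<Longrightarrow> 0 \<le> d \<Longrightarrow> d < q \<Longrightarrow>
          (e1+d) mod q = e1' \<Longrightarrow> (e2+d) mod q = e2' \<Longrightarrow> d = 0"
   and s_disj: "\<And>S S' x. S \<in> set SP \<Longrightarrow> S' \<in> set SP \<Longrightarrow> x \<in> set S \<Longrightarrow> x \<in> set S' \<Longrightarrow> S = S'"
   and d_dist: "distinct HT" and s_dist: "distinct SP"
   and lens: "length HT = 2 * nat q" "length SP = nat q"
begin

abbreviation "H \<equiv> Hs r t"
abbreviation "R \<equiv> Rs r t"
abbreviation "C \<equiv> Cs r t HT SP"

lemma canc: "unitk k \<Longrightarrow> rz r t (lin k d) \<Longrightarrow> rz r t d"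
  using cancel[OF ur ut] by blast

lemma unit2: "unitk (2,2,0)" by simp

lemma H_R: "j \<in> H \<Longrightarrow> j \<in> R" unfolding Hs_def by auto
lemma H_nz: "j \<in> H \<Longrightarrow> \<not> rz r t j"
proof
  assume j: "j \<in> H" and z: "rz r t j"
  obtain x y z where jj: "j = (x,y,z)" by (cases j)
  have "x = 0" "y = 0" "z = 0" using j z jj dvd_small unfolding Hs_def Rs_def by auto
  hence "j = (0,0,0)" using jj by simp
  thus False using j unfolding Hs_def by simp
qed

lemma rneg_R: "rneg r t w \<in> R" unfolding rneg_def using nrm_Rs rp tp by blast

lemma rneg_rneg: "w \<in> R \<Longrightarrow> rneg r t (rneg r t w) = w"
proof -
  assume w: "w \<in> R"
  have "rz r t (nrm r t (- w) - (- w))" by (rule rz_nrm)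
  hence "rz r t (- nrm r t (- w) - w)" using rz_neg by (metis minus_diff_eq diff_minus_eq_add add.commute)
  hence "nrm r t (- nrm r t (- w)) = nrm r t w" using nrm_eq_iff by blast
  thus ?thesis unfolding rneg_def using nrm_id[OF w] by simp
qed

lemma H_anti: "j \<in> H \<Longrightarrow> j' \<in> H \<Longrightarrow> rz r t (j + j') \<Longrightarrow> False"
proof -
  assume j: "j \<in> H" and j': "j' \<in> H" and z: "rz r t (j + j')"
  have "rz r t (j - (- j'))" using z by simp
  hence "nrm r t j = nrm r t (- j')" using nrm_eq_iff by blast
  hence jj: "j = rneg r t j'" unfolding rneg_def using nrm_id H_R[OF j] by simp
  have "lexlt j' j" using j' jj unfolding Hs_def by simp
  moreover have "rneg r t j = j'" using jj rneg_rneg H_R[OF j'] by simp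
  hence "lexlt j j'" using j unfolding Hs_def by simp
  ultimately show False using lexlt_asym by blast
qed

lemma H_eq: "j \<in> H \<Longrightarrow> j' \<in> H \<Longrightarrow> rz r t (j - j') \<Longrightarrow> j = j'"
  using Rs_eq H_R by blast

lemma core_pt:
  assumes A: "A \<in> set HT" and B: "B \<in> set HT" and j: "j \<in> H" and j': "j' \<in> H"
    and u: "u \<in> set A" and u': "u' \<in> set B" and eq: "pt r t u j = pt r t u' j'"
  shows "A = B \<and> j = j' \<and> u = u'"
proof -
  obtain e l k where uu: "u = (e,l,k)" by (cases u)
  obtain e' l' k' where uu': "u' = (e',l',k')" by (cases u')
  have s: "e = e'" "l = l'" and n: "nrm r t (lin k j) = nrm r t (lin k' j')" using eq uu uu' by auto
  have z: "rz r t (lin k j - lin k' j')" using n nrm_eq_iff by blast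
  have uk: "unitk k" using d_unit A u uu by blast
  from d_slot[OF A B] u u' uu uu' s have "A = B \<or> k' = - k" by blast
  thus ?thesis
  proof
    assume AB: "A = B"
    have "u = u'"
    proof (rule ccontr)
      assume "u \<noteq> u'"
      moreover have "distinct (map (\<lambda>(e,l,k). (e,l)) A)" using d_len A by blast
      ultimately show False using u u' AB uu uu' s by (auto simp: distinct_map inj_on_def)
    qed
    hence "k = k'" using uu uu' by simp
    hence "rz r t (lin k (j - j'))" using z by (simp add: lin_diff_right)
    hence "rz r t (j - j')" using canc uk by blast
    thus ?thesis using H_eq j j' AB \<open>u = u'\<close> by blast
  next
    assume "k' = - k"
    hence "rz r t (lin k (j + j'))" using z by (simp add: lin_neg_left lin_add_right lin_neg_right)
    hence "rz r t (j + j')" using canc uk by blast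
    thus ?thesis using H_anti j j' by blast
  qed
qed

lemma pt_not_spt:
  assumes A: "A \<in> set HT" and j: "j \<in> H" and u: "u \<in> set A" and eq: "pt r t u j = spt s"
  shows False
proof -
  obtain e l k where uu: "u = (e,l,k)" by (cases u)
  obtain e' l' where ss: "s = (e',l')" by (cases s)
  have "nrm r t (lin k j) = nrm r t 0" using eq uu ss by (simp add: zero_prod_def)
  hence "rz r t (lin k j)" using nrm_eq_iff by fastforce
  hence "rz r t j" using canc d_unit A u uu by blast
  thus False using H_nz j by blast
qed

lemma spt_inj: "spt s = spt s' \<Longrightarrow> s = s'"
  by (cases s; cases s') auto

lemma C_cases:
  assumes "T \<in> C"
  shows "(\<exists>A j. A \<in> set HT \<and> j \<in> H \<and> T = htri r t A j) \<or> (\<exists>S. S \<in> set SP \<and> T = spt ` set S)"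
  using assms unfolding Cs_def by blast

lemma C_disj:
  assumes T: "T \<in> C" and T': "T' \<in> C" and x: "x \<in> T" "x \<in> T'"
  shows "T = T'"
  using C_cases[OF T]
proof
  assume "\<exists>A j. A \<in> set HT \<and> j \<in> H \<and> T = htri r t A j"
  then obtain A j where h: "A \<in> set HT" "j \<in> H" "T = htri r t A j" by blast
  then obtain u where u: "u \<in> set A" "x = pt r t u j" using x unfolding htri_def by auto
  show ?thesis using C_cases[OF T']
  proof
    assume "\<exists>A j. A \<in> set HT \<and> j \<in> H \<and> T' = htri r t A j"
    then obtain B j' where h': "B \<in> set HT" "j' \<in> H" "T' = htri r t B j'" by blast
    then obtain u' where u': "u' \<in> set B" "x = pt r t u' j'" using x unfolding htri_def by auto
    have "A = B \<and> j = j'" using core_pt[OF h(1) h'(1) h(2) h'(2) u(1) u'(1)] u u' by simp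
    thus ?thesis using h h' by simp
  next
    assume "\<exists>S. S \<in> set SP \<and> T' = spt ` set S"
    then obtain S where "S \<in> set SP" "T' = spt ` set S" by blast
    then obtain s' where "x = spt s'" using x by auto
    thus ?thesis using pt_not_spt h u by metis
  qed
next
  assume "\<exists>S. S \<in> set SP \<and> T = spt ` set S"
  then obtain S where S: "S \<in> set SP" "T = spt ` set S" by blast
  then obtain s1 where s1: "s1 \<in> set S" "x = spt s1" using x by auto
  show ?thesis using C_cases[OF T']
  proof
    assume "\<exists>A j. A \<in> set HT \<and> j \<in> H \<and> T' = htri r t A j"
    then obtain B j' where h': "B \<in> set HT" "j' \<in> H" "T' = htri r t B j'" by blast
    then obtain u' where u': "u' \<in> set B" "x = pt r t u' j'" using x unfolding htri_def by auto
    thus ?thesis using pt_not_spt h' s1 by metis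
  next
    assume "\<exists>S. S \<in> set SP \<and> T' = spt ` set S"
    then obtain S' where S': "S' \<in> set SP" "T' = spt ` set S'" by blast
    then obtain s2 where s2: "s2 \<in> set S'" "x = spt s2" using x by auto
    have "s1 = s2" using s1 s2 spt_inj by simp
    hence "S = S'" using s_disj S S' s1 s2 by blast
    thus ?thesis using S S' by simp
  qed
qed

lemma nrm_add_eq: "nrm r t (nrm r t X + D) = nrm r t Y \<Longrightarrow> rz r t (X + D - Y)"
proof -
  assume "nrm r t (nrm r t X + D) = nrm r t Y"
  hence a: "rz r t (nrm r t X + D - Y)" using nrm_eq_iff by blast
  have b: "rz r t (nrm r t X - X)" by (rule rz_nrm)
  have eq: "X + D - Y = (nrm r t X + D - Y) - (nrm r t X - X)" by (simp add: algebra_simps)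
  show ?thesis by (subst eq) (rule rz_diff[OF a b])
qed

lemma mod_dvd: "(a::int) mod q = b \<Longrightarrow> 0 \<le> b \<Longrightarrow> b < q \<Longrightarrow> q dvd (a - b)"
  by (metis mod_eq_dvd_iff mod_pos_pos_trivial)

lemma pt_N: "A \<in> set HT \<Longrightarrow> u \<in> set A \<Longrightarrow> pt r t u j \<in> Ns q r t"
proof -
  assume a: "A \<in> set HT" "u \<in> set A"
  obtain e l k where uu: "u = (e,l,k)" by (cases u)
  show ?thesis using d_range[OF a(1)] a(2) uu nrm_Rs[OF rp tp] unfolding Ns_def Gs_def by auto
qed

lemma spt_N: "S \<in> set SP \<Longrightarrow> s \<in> set S \<Longrightarrow> spt s \<in> Ns q r t"
proof -
  assume a: "S \<in> set SP" "s \<in> set S"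
  obtain e l where ss: "s = (e,l)" by (cases s)
  have "(0,0,0) \<in> R" using rp tp unfolding Rs_def by auto
  thus ?thesis using s_range[OF a(1)] a(2) ss unfolding Ns_def Gs_def by auto
qed

lemma C_N: "T \<in> C \<Longrightarrow> T \<subseteq> Ns q r t"
  using pt_N spt_N unfolding Cs_def htri_def by blast

lemma tr_N: "d \<in> Gs q r t \<Longrightarrow> p \<in> Ns q r t \<Longrightarrow> tr q r t d p \<in> Ns q r t"
proof -
  assume d: "d \<in> Gs q r t" and p: "p \<in> Ns q r t"
  obtain g l where pp: "p = (g,l)" by (cases p)
  obtain e w where gg: "g = (e,w)" by (cases g)
  obtain de dw where dd: "d = (de,dw)" by (cases d)
  show ?thesis using p d pp gg dd nrm_Rs[OF rp tp] qp unfolding Ns_def Gs_def by auto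
qed

lemma tr_inj: "p \<in> Ns q r t \<Longrightarrow> p' \<in> Ns q r t \<Longrightarrow> tr q r t d p = tr q r t d p' \<Longrightarrow> p = p'"
proof -
  assume p: "p \<in> Ns q r t" and p': "p' \<in> Ns q r t" and eq: "tr q r t d p = tr q r t d p'"
  obtain e w l where pp: "p = ((e,w),l)" by (metis prod.exhaust)
  obtain e' w' l' where pp': "p' = ((e',w'),l')" by (metis prod.exhaust)
  obtain de dw where dd: "d = (de,dw)" by (cases d)
  have l: "l = l'" and e: "(e + de) mod q = (e' + de) mod q" and w: "nrm r t (w + dw) = nrm r t (w' + dw)"
    using eq pp pp' dd by auto
  have "q dvd (e - e')" using e by (simp add: mod_eq_dvd_iff)
  hence ee: "e = e'" using p p' pp pp' unfolding Ns_def Gs_def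
    by (metis atLeastLessThan_iff mem_Sigma_iff mod_eq_dvd_iff mod_pos_pos_trivial prod.inject)
  have "rz r t (w + dw - (w' + dw))" using w nrm_eq_iff by blast
  hence "rz r t (w - w')" by simp
  moreover have "w \<in> R" "w' \<in> R" using p p' pp pp' unfolding Ns_def Gs_def by auto
  ultimately have "w = w'" using Rs_eq by blast
  thus ?thesis using pp pp' l ee by simp
qed

lemma zero_R: "(0,0,0) \<in> R" using rp tp unfolding Rs_def by auto

lemma rz_R_zero: "w \<in> R \<Longrightarrow> rz r t w \<Longrightarrow> w = (0,0,0)"
proof -
  assume "w \<in> R" "rz r t w"
  moreover have "w - (0,0,0) = w" by (cases w) simp
  ultimately show ?thesis using Rs_eq[of w r t "(0,0,0)"] zero_R by simp
qed

lemma D_HH: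
  assumes A: "A \<in> set HT" and B: "B \<in> set HT" and j: "j \<in> H" and j': "j' \<in> H"
    and u: "u \<in> set A" and v: "v \<in> set A" and uv: "u \<noteq> v"
    and u': "u' \<in> set B" and v': "v' \<in> set B" and d: "d \<in> Gs q r t"
    and e1: "tr q r t d (pt r t u j) = pt r t u' j'" and e2: "tr q r t d (pt r t v j) = pt r t v' j'"
  shows "d = (0,(0,0,0))"
proof -
  obtain e1 l1 k1 where uu: "u = (e1,l1,k1)" by (cases u)
  obtain e2 l2 k2 where vv: "v = (e2,l2,k2)" by (cases v)
  obtain e1' l1' k1' where uu': "u' = (e1',l1',k1')" by (cases u')
  obtain e2' l2' k2' where vv': "v' = (e2',l2',k2')" by (cases v')
  obtain de dw where dd: "d = (de,dw)" by (cases d)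
  have de: "0 \<le> de" "de < q" and dw: "dw \<in> R" using d dd unfolding Gs_def by auto
  have ra: "0 \<le> e1'" "e1' < q" "0 \<le> e2'" "e2' < q"
    using d_range[OF B] u' v' uu' vv' by blast+
  have L: "l1' = l1" "l2' = l2" and E1: "(e1 + de) mod q = e1'" and E2: "(e2 + de) mod q = e2'"
    and W1: "nrm r t (nrm r t (lin k1 j) + dw) = nrm r t (lin k1' j')"
    and W2: "nrm r t (nrm r t (lin k2 j) + dw) = nrm r t (lin k2' j')"
    using e1 e2 uu vv uu' vv' dd by auto
  have z1: "rz r t (lin k1 j + dw - lin k1' j')" using nrm_add_eq[OF W1] .
  have z2: "rz r t (lin k2 j + dw - lin k2' j')" using nrm_add_eq[OF W2] .
  have "lin (k2 - k1) j - lin (k2' - k1') j' = (lin k2 j + dw - lin k2' j') - (lin k1 j + dw - lin k1' j')"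
    by (simp add: lin_diff_left algebra_simps)
  hence z: "rz r t (lin (k2 - k1) j - lin (k2' - k1') j')" using rz_diff[OF z2 z1] by simp
  have q1: "q dvd (e1 + de - e1')" using mod_dvd[OF E1 ra(1,2)] .
  have q2: "q dvd (e2 + de - e2')" using mod_dvd[OF E2 ra(3,4)] .
  have "e2 - e1 - (e2' - e1') = (e2 + de - e2') - (e1 + de - e1')" by simp
  hence qd: "q dvd (e2 - e1 - (e2' - e1'))" using q1 q2 by (metis dvd_diff)
  have sl: "(e1,l1) \<noteq> (e2,l2)"
  proof
    assume "(e1,l1) = (e2,l2)"
    moreover have "distinct (map (\<lambda>(e,l,k). (e,l)) A)" using d_len A by blast
    ultimately show False using u v uv uu vv by (auto simp: distinct_map inj_on_def)
  qed
  have uk: "unitk (k2 - k1)" using d_unit2[OF A] u v uu vv sl by blast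
  have u'': "(e1',l1,k1') \<in> set B" "(e2',l2,k2') \<in> set B" using u' v' uu' vv' L by auto
  from d_pair[OF A B _ _ u''(1) u''(2) sl qd] u v uu vv
  have "(A = B \<and> e1 = e1' \<and> k1 = k1' \<and> e2 = e2' \<and> k2 = k2') \<or> k2' - k1' = - (k2 - k1)" by blast
  thus ?thesis
  proof
    assume same: "A = B \<and> e1 = e1' \<and> k1 = k1' \<and> e2 = e2' \<and> k2 = k2'"
    hence "rz r t (lin (k2 - k1) (j - j'))" using z by (simp add: lin_diff_right)
    hence "rz r t (j - j')" using canc uk by blast
    hence jj: "j = j'" using H_eq j j' by blast
    have "rz r t dw" using z1 same jj by simp
    hence w0: "dw = (0,0,0)" using rz_R_zero dw by blast
    have "q dvd de" using q1 same by simp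
    hence "de = 0" using de dvd_small by blast
    thus ?thesis using w0 dd by simp
  next
    assume op: "k2' - k1' = - (k2 - k1)"
    have "lin (k2' - k1') j' = - lin (k2 - k1) j'" by (metis op lin_neg_left lin_neg_right)
    hence "rz r t (lin (k2 - k1) (j + j'))" using z by (simp add: lin_add_right)
    hence "rz r t (j + j')" using canc uk by blast
    thus ?thesis using H_anti j j' by blast
  qed
qed

lemma slots_ne: "A \<in> set HT \<Longrightarrow> (e1,l1,k1) \<in> set A \<Longrightarrow> (e2,l2,k2) \<in> set A \<Longrightarrow>
   (e1,l1,k1) \<noteq> (e2,l2,k2) \<Longrightarrow> (e1,l1) \<noteq> (e2,l2)"
proof
  assume A: "A \<in> set HT" and u: "(e1,l1,k1) \<in> set A" and v: "(e2,l2,k2) \<in> set A"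
    and ne: "(e1,l1,k1) \<noteq> (e2,l2,k2)" and eq: "(e1,l1) = (e2,l2)"
  have "distinct (map (\<lambda>(e,l,k). (e,l)) A)" using d_len A by blast
  thus False using u v ne eq by (auto simp: distinct_map inj_on_def)
qed

lemma D_HS:
  assumes A: "A \<in> set HT" and j: "j \<in> H"
    and u: "u \<in> set A" and v: "v \<in> set A" and uv: "u \<noteq> v" and d: "d \<in> Gs q r t"
    and e1: "tr q r t d (pt r t u j) = spt s1" and e2: "tr q r t d (pt r t v j) = spt s2"
  shows False
proof -
  obtain e1 l1 k1 where uu: "u = (e1,l1,k1)" by (cases u)
  obtain e2 l2 k2 where vv: "v = (e2,l2,k2)" by (cases v)
  obtain a1 b1 where s1: "s1 = (a1,b1)" by (cases s1)
  obtain a2 b2 where s2: "s2 = (a2,b2)" by (cases s2)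
  obtain de dw where dd: "d = (de,dw)" by (cases d)
  have W1: "nrm r t (nrm r t (lin k1 j) + dw) = nrm r t 0"
    and W2: "nrm r t (nrm r t (lin k2 j) + dw) = nrm r t 0"
    using e1 e2 uu vv s1 s2 dd by (auto simp: zero_prod_def)
  have z1: "rz r t (lin k1 j + dw - 0)" using nrm_add_eq[OF W1] .
  have z2: "rz r t (lin k2 j + dw - 0)" using nrm_add_eq[OF W2] .
  have "lin (k2 - k1) j = (lin k2 j + dw - 0) - (lin k1 j + dw - 0)"
    by (simp add: lin_diff_left algebra_simps)
  hence z: "rz r t (lin (k2 - k1) j)" using rz_diff[OF z2 z1] by simp
  have sl: "(e1,l1) \<noteq> (e2,l2)" using slots_ne[OF A] u v uv uu vv by blast
  have uk: "unitk (k2 - k1)" using d_unit2[OF A] u v uu vv sl by blast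
  hence "rz r t j" using canc z by blast
  thus False using H_nz j by blast
qed

lemma D_SH:
  assumes B: "B \<in> set HT" and j': "j' \<in> H"
    and u': "u' \<in> set B" and v': "v' \<in> set B" and uv: "u' \<noteq> v'" and d: "d \<in> Gs q r t"
    and e1: "tr q r t d (spt s1) = pt r t u' j'" and e2: "tr q r t d (spt s2) = pt r t v' j'"
  shows False
proof -
  obtain e1 l1 k1 where uu: "u' = (e1,l1,k1)" by (cases u')
  obtain e2 l2 k2 where vv: "v' = (e2,l2,k2)" by (cases v')
  obtain a1 b1 where s1: "s1 = (a1,b1)" by (cases s1)
  obtain a2 b2 where s2: "s2 = (a2,b2)" by (cases s2)
  obtain de dw where dd: "d = (de,dw)" by (cases d)
  have W1: "nrm r t (0 + dw) = nrm r t (lin k1 j')"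
    and W2: "nrm r t (0 + dw) = nrm r t (lin k2 j')"
    using e1 e2 uu vv s1 s2 dd by (auto simp: zero_prod_def)
  have z1: "rz r t (0 + dw - lin k1 j')" using W1 nrm_eq_iff by blast
  have z2: "rz r t (0 + dw - lin k2 j')" using W2 nrm_eq_iff by blast
  have "lin (k2 - k1) j' = (0 + dw - lin k1 j') - (0 + dw - lin k2 j')"
    by (simp add: lin_diff_left algebra_simps)
  hence z: "rz r t (lin (k2 - k1) j')" using rz_diff[OF z1 z2] by simp
  have sl: "(e1,l1) \<noteq> (e2,l2)" using slots_ne[OF B] u' v' uv uu vv by blast
  have uk: "unitk (k2 - k1)" using d_unit2[OF B] u' v' uu vv sl by blast
  hence "rz r t j'" using canc z by blast
  thus False using H_nz j' by blast
qed

lemma D_SS: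
  assumes S: "S \<in> set SP" and S': "S' \<in> set SP"
    and s1: "s1 \<in> set S" and s2: "s2 \<in> set S" and ne: "s1 \<noteq> s2"
    and s1': "s1' \<in> set S'" and s2': "s2' \<in> set S'" and d: "d \<in> Gs q r t"
    and e1: "tr q r t d (spt s1) = spt s1'" and e2: "tr q r t d (spt s2) = spt s2'"
  shows "d = (0,(0,0,0))"
proof -
  obtain a1 b1 where ss1: "s1 = (a1,b1)" by (cases s1)
  obtain a2 b2 where ss2: "s2 = (a2,b2)" by (cases s2)
  obtain a1' b1' where ss1': "s1' = (a1',b1')" by (cases s1')
  obtain a2' b2' where ss2': "s2' = (a2',b2')" by (cases s2')
  obtain de dw where dd: "d = (de,dw)" by (cases d)
  have de: "0 \<le> de" "de < q" and dw: "dw \<in> R" using d dd unfolding Gs_def by auto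
  have W: "nrm r t (0 + dw) = nrm r t 0" and L: "b1' = b1" "b2' = b2"
    and E1: "(a1 + de) mod q = a1'" and E2: "(a2 + de) mod q = a2'"
    using e1 e2 ss1 ss2 ss1' ss2' dd by (auto simp: zero_prod_def)
  have "rz r t (0 + dw - 0)" using W nrm_eq_iff by blast
  hence w0: "dw = (0,0,0)" using rz_R_zero dw by simp
  have "de = 0" using s_pair[OF S S' _ _ _ _ _ de E1 E2] s1 s2 s1' s2' ss1 ss2 ss1' ss2' ne L by auto
  thus ?thesis using w0 dd by simp
qed

lemma D_prop:
  assumes T: "T \<in> C" and T': "T' \<in> C" and p: "p \<in> T" and p2: "p2 \<in> T" and ne: "p \<noteq> p2"
    and d: "d \<in> Gs q r t" and i1: "tr q r t d p \<in> T'" and i2: "tr q r t d p2 \<in> T'"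
  shows "d = (0,(0,0,0))"
proof -
  have NN: "p \<in> Ns q r t" "p2 \<in> Ns q r t" using C_N T p p2 by auto
  have ne2: "tr q r t d p \<noteq> tr q r t d p2" using tr_inj NN ne by blast
  show ?thesis using C_cases[OF T]
  proof
    assume "\<exists>A j. A \<in> set HT \<and> j \<in> H \<and> T = htri r t A j"
    then obtain A j where h: "A \<in> set HT" "j \<in> H" "T = htri r t A j" by blast
    then obtain u v where uv: "u \<in> set A" "p = pt r t u j" "v \<in> set A" "p2 = pt r t v j"
      using p p2 unfolding htri_def by auto
    have uvne: "u \<noteq> v" using uv ne by auto
    show ?thesis using C_cases[OF T']
    proof
      assume "\<exists>A j. A \<in> set HT \<and> j \<in> H \<and> T' = htri r t A j"
      then obtain B j' where h': "B \<in> set HT" "j' \<in> H" "T' = htri r t B j'" by blast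
      then obtain u' v' where uv': "u' \<in> set B" "tr q r t d p = pt r t u' j'" "v' \<in> set B" "tr q r t d p2 = pt r t v' j'"
        using i1 i2 unfolding htri_def by auto
      show ?thesis using D_HH[OF h(1) h'(1) h(2) h'(2) uv(1) uv(3) uvne uv'(1) uv'(3) d] uv uv' by simp
    next
      assume "\<exists>S. S \<in> set SP \<and> T' = spt ` set S"
      then obtain S where "S \<in> set SP" "T' = spt ` set S" by blast
      then obtain s1 s2 where "tr q r t d p = spt s1" "tr q r t d p2 = spt s2" using i1 i2 by auto
      thus ?thesis using D_HS[OF h(1) h(2) uv(1) uv(3) uvne d] uv by blast
    qed
  next
    assume "\<exists>S. S \<in> set SP \<and> T = spt ` set S"
    then obtain S where S: "S \<in> set SP" "T = spt ` set S" by blast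
    then obtain s1 s2 where ss: "s1 \<in> set S" "p = spt s1" "s2 \<in> set S" "p2 = spt s2" using p p2 by auto
    have sne: "s1 \<noteq> s2" using ss ne by auto
    show ?thesis using C_cases[OF T']
    proof
      assume "\<exists>A j. A \<in> set HT \<and> j \<in> H \<and> T' = htri r t A j"
      then obtain B j' where h': "B \<in> set HT" "j' \<in> H" "T' = htri r t B j'" by blast
      then obtain u' v' where uv': "u' \<in> set B" "tr q r t d p = pt r t u' j'" "v' \<in> set B" "tr q r t d p2 = pt r t v' j'"
        using i1 i2 unfolding htri_def by auto
      have "u' \<noteq> v'" using uv' ne2 by auto
      thus ?thesis using D_SH[OF h'(1) h'(2) uv'(1) uv'(3) _ d] uv' ss by blast
    next
      assume "\<exists>S. S \<in> set SP \<and> T' = spt ` set S"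
      then obtain S' where S': "S' \<in> set SP" "T' = spt ` set S'" by blast
      then obtain s1' s2' where "s1' \<in> set S'" "tr q r t d p = spt s1'" "s2' \<in> set S'" "tr q r t d p2 = spt s2'"
        using i1 i2 by auto
      thus ?thesis using D_SS[OF S(1) S'(1) ss(1) ss(3) sne] ss d by simp
    qed
  qed
qed

lemma finite_R: "finite R"
proof -
  have "R = {0..<r} \<times> {0..<t} \<times> {0..<t}" unfolding Rs_def by auto
  thus ?thesis by simp
qed

lemma rneg_ne: "w \<in> R \<Longrightarrow> w \<noteq> (0,0,0) \<Longrightarrow> rneg r t w \<noteq> w"
proof
  assume w: "w \<in> R" "w \<noteq> (0,0,0)" and e: "rneg r t w = w"
  have "nrm r t (- w) = nrm r t w" using e nrm_id[OF w(1)] unfolding rneg_def by simp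
  hence "rz r t (- w - w)" using nrm_eq_iff by blast
  hence "rz r t (- (w + w))" by (simp add: algebra_simps)
  hence "rz r t (w + w)" using rz_neg by blast
  moreover have "lin (2,2,0) w = w + w" by (cases w) simp
  ultimately have "rz r t (lin (2,2,0) w)" by simp
  hence "rz r t w" using canc[OF unit2] by blast
  thus False using rz_R_zero w by blast
qed

lemma rneg_nz: "w \<in> R \<Longrightarrow> w \<noteq> (0,0,0) \<Longrightarrow> rneg r t w \<noteq> (0,0,0)"
proof
  assume w: "w \<in> R" "w \<noteq> (0,0,0)" and e: "rneg r t w = (0,0,0)"
  have "rneg r t (rneg r t w) = (0,0,0)" using e unfolding rneg_def by (simp add: zero_prod_def)
  thus False using rneg_rneg w by simp
qed

lemma card_H: "2 * card H + 1 = card R"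
proof -
  have HR: "H \<subseteq> R - {(0,0,0)}" unfolding Hs_def by auto
  have NR: "rneg r t ` H \<subseteq> R - {(0,0,0)}"
  proof
    fix x assume "x \<in> rneg r t ` H"
    then obtain w where w: "w \<in> H" "x = rneg r t w" by blast
    have "w \<in> R" "w \<noteq> (0,0,0)" using w HR by auto
    hence "x \<noteq> (0,0,0)" using w(2) rneg_nz by simp
    moreover have "x \<in> R" using w(2) rneg_R by simp
    ultimately show "x \<in> R - {(0,0,0)}" by simp
  qed
  have cov: "R - {(0,0,0)} \<subseteq> H \<union> rneg r t ` H"
  proof
    fix w assume w: "w \<in> R - {(0,0,0)}"
    hence wR: "w \<in> R" and wz: "w \<noteq> (0,0,0)" by auto
    show "w \<in> H \<union> rneg r t ` H"
    proof (cases "lexlt w (rneg r t w)")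
      case True
      hence "w \<in> H" using wR wz unfolding Hs_def by simp
      thus ?thesis by blast
    next
      case False
      have "rneg r t w \<noteq> w" by (rule rneg_ne[OF wR wz])
      hence "lexlt (rneg r t w) w" using lexlt_total False by metis
      hence l: "lexlt (rneg r t w) (rneg r t (rneg r t w))" using rneg_rneg[OF wR] by simp
      have "rneg r t w \<in> R" by (rule rneg_R)
      moreover have "rneg r t w \<noteq> (0,0,0)" by (rule rneg_nz[OF wR wz])
      ultimately have "rneg r t w \<in> H" using l unfolding Hs_def by simp
      moreover have "w = rneg r t (rneg r t w)" using rneg_rneg[OF wR] by simp
      ultimately show ?thesis by blast
    qed
  qed
  have dis: "H \<inter> rneg r t ` H = {}"
  proof (rule ccontr)
    assume "H \<inter> rneg r t ` H \<noteq> {}"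
    then obtain w v where wv: "w \<in> H" "v \<in> H" "w = rneg r t v" by blast
    have "rz r t (nrm r t (- v) - (- v))" by (rule rz_nrm)
    moreover have "nrm r t (- v) - (- v) = w + v" using wv(3) unfolding rneg_def by simp
    ultimately have "rz r t (w + v)" by simp
    thus False using H_anti wv(1,2) by blast
  qed
  have eqR: "R - {(0,0,0)} = H \<union> rneg r t ` H" using HR NR cov by blast
  have fR0: "finite (R - {(0,0,0)})" using finite_R by blast
  have fH: "finite H" by (rule finite_subset[OF HR fR0])
  have "inj_on (rneg r t) H"
  proof (rule inj_onI)
    fix a b assume "a \<in> H" "b \<in> H" "rneg r t a = rneg r t b"
    hence "rneg r t (rneg r t a) = rneg r t (rneg r t b)" by simp
    thus "a = b" using rneg_rneg H_R \<open>a \<in> H\<close> \<open>b \<in> H\<close> by simp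
  qed
  hence cN: "card (rneg r t ` H) = card H" by (rule card_image)
  have fN: "finite (rneg r t ` H)" using fH by blast
  have "card (R - {(0,0,0)}) = card (H \<union> rneg r t ` H)" using eqR by simp
  also have "\<dots> = card H + card (rneg r t ` H)" by (rule card_Un_disjoint[OF fH fN dis])
  finally have c1: "card (R - {(0,0,0)}) = card H + card H" using cN by simp
  have c2: "card (R - {(0,0,0)}) = card R - 1" using zero_R finite_R by simp
  have "card R \<noteq> 0" using zero_R finite_R by auto
  thus ?thesis using c1 c2 by simp
qed

lemma htri_inj: "A \<in> set HT \<Longrightarrow> B \<in> set HT \<Longrightarrow> j \<in> H \<Longrightarrow> j' \<in> H \<Longrightarrow> htri r t A j = htri r t B j' \<Longrightarrow> A = B \<and> j = j'"
proof -
  assume a: "A \<in> set HT" "B \<in> set HT" "j \<in> H" "j' \<in> H" "htri r t A j = htri r t B j'"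
  have "length A = 3" using d_len a(1) by blast
  hence "A \<noteq> []" by auto
  hence "set A \<noteq> {}" by simp
  then obtain u where u: "u \<in> set A" by (metis ex_in_conv)
  have "pt r t u j \<in> htri r t A j" unfolding htri_def using u by (rule imageI)
  hence "pt r t u j \<in> htri r t B j'" using a(5) by simp
  then obtain u' where "u' \<in> set B" "pt r t u j = pt r t u' j'" unfolding htri_def by blast
  thus ?thesis using core_pt[OF a(1) a(2) a(3) a(4) u] by simp
qed

lemma spt_set_inj: "S \<in> set SP \<Longrightarrow> S' \<in> set SP \<Longrightarrow> spt ` set S = spt ` set S' \<Longrightarrow> S = S'"
proof -
  assume a: "S \<in> set SP" "S' \<in> set SP" "spt ` set S = spt ` set S'"
  have "length S = 3" using s_len a(1) by blast
  hence "S \<noteq> []" by auto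
  hence "set S \<noteq> {}" by simp
  then obtain s where s: "s \<in> set S" by (metis ex_in_conv)
  have "spt s \<in> spt ` set S" using s by (rule imageI)
  hence "spt s \<in> spt ` set S'" using a(3) by simp
  then obtain s' where ss': "s' \<in> set S'" "spt s = spt s'" by blast
  hence "s \<in> set S'" using spt_inj[of s s'] by simp
  thus ?thesis using s_disj a s by blast
qed

lemma card_C: "finite C \<and> card C = nat q * card R"
proof -
  define C1 where "C1 = (\<lambda>(A,j). htri r t A j) ` (set HT \<times> H)"
  define C2 where "C2 = (\<lambda>S. spt ` set S) ` set SP"
  have C1eq: "(\<Union>A\<in>set HT. htri r t A ` H) = C1" unfolding C1_def by (auto simp: image_iff)
  have CC: "C = C1 \<union> C2" unfolding Cs_def C2_def using C1eq by simp
  have "H \<subseteq> R" using H_R by blast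
  hence fH: "finite H" by (rule finite_subset[OF _ finite_R])
  have i1: "inj_on (\<lambda>(A,j). htri r t A j) (set HT \<times> H)"
  proof (rule inj_onI)
    fix x y assume "x \<in> set HT \<times> H" "y \<in> set HT \<times> H" "(\<lambda>(A,j). htri r t A j) x = (\<lambda>(A,j). htri r t A j) y"
    moreover obtain A j B j' where "x = (A,j)" "y = (B,j')" by (cases x; cases y) auto
    ultimately show "x = y" using htri_inj[of A B j j'] by auto
  qed
  have "card C1 = card (set HT \<times> H)" unfolding C1_def by (rule card_image[OF i1])
  also have "\<dots> = card (set HT) * card H" by (rule card_cartesian_product)
  also have "card (set HT) = length HT" by (rule distinct_card[OF d_dist])
  finally have c1: "card C1 = 2 * nat q * card H" using lens(1) by simp
  have i2: "inj_on (\<lambda>S. spt ` set S) (set SP)"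
  proof (rule inj_onI)
    fix x y assume "x \<in> set SP" "y \<in> set SP" "spt ` set x = spt ` set y"
    thus "x = y" using spt_set_inj by blast
  qed
  have "card C2 = card (set SP)" unfolding C2_def by (rule card_image[OF i2])
  also have "\<dots> = length SP" by (rule distinct_card[OF s_dist])
  finally have c2: "card C2 = nat q" using lens(2) by simp
  have dis: "C1 \<inter> C2 = {}"
  proof (rule ccontr)
    assume "C1 \<inter> C2 \<noteq> {}"
    then obtain X where X: "X \<in> C1" "X \<in> C2" by blast
    from X(1) obtain A j where A: "A \<in> set HT" "j \<in> H" "X = htri r t A j" unfolding C1_def by blast
    from X(2) obtain S where S: "S \<in> set SP" "X = spt ` set S" unfolding C2_def by blast
    have a: "A \<in> set HT" "j \<in> H" "S \<in> set SP" "htri r t A j = spt ` set S" using A S by auto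
    have "length A = 3" using d_len a(1) by blast
    hence "A \<noteq> []" by auto
  hence "set A \<noteq> {}" by simp
  then obtain u where u: "u \<in> set A" by (metis ex_in_conv)
    have "pt r t u j \<in> htri r t A j" using u unfolding htri_def by blast
    hence "pt r t u j \<in> spt ` set S" using a(4) by simp
    then obtain s where "pt r t u j = spt s" by blast
    thus False using pt_not_spt a u by blast
  qed
  have f1: "finite C1" unfolding C1_def using fH by simp
  have f2: "finite C2" unfolding C2_def by simp
  have "card C = card (C1 \<union> C2)" using CC by simp
  also have "\<dots> = card C1 + card C2" by (rule card_Un_disjoint[OF f1 f2 dis])
  also have "\<dots> = nat q * (2 * card H + 1)" using c1 c2 by (simp add: algebra_simps)
  also have "\<dots> = nat q * card R" using card_H by simp
  finally show ?thesis using CC f1 f2 by simp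
qed

lemma card_T: "T \<in> C \<Longrightarrow> card T = 3"
proof -
  assume T: "T \<in> C"
  show ?thesis using C_cases[OF T]
  proof
    assume "\<exists>A j. A \<in> set HT \<and> j \<in> H \<and> T = htri r t A j"
    then obtain A j where h: "A \<in> set HT" "j \<in> H" "T = htri r t A j" by blast
    have "inj_on (\<lambda>u. pt r t u j) (set A)"
    proof (rule inj_onI)
      fix x y assume "x \<in> set A" "y \<in> set A" "pt r t x j = pt r t y j"
      thus "x = y" using core_pt[OF h(1) h(1) h(2) h(2)] by blast
    qed
    moreover have "distinct A" "length A = 3" using d_len h(1) by (auto simp: distinct_map)
    ultimately show ?thesis using h unfolding htri_def by (simp add: card_image distinct_card)
  next
    assume "\<exists>S. S \<in> set SP \<and> T = spt ` set S"
    then obtain S where S: "S \<in> set SP" "T = spt ` set S" by blast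
    have "inj_on spt (set S)" by (rule inj_onI) (rule spt_inj)
    moreover have "distinct S" "length S = 3" using s_len S(1) by auto
    ultimately show ?thesis using S by (simp add: card_image distinct_card)
  qed
qed

end


context cons begin

lemma card_G: "finite (Gs q r t) \<and> card (Gs q r t) = nat q * card R"
  unfolding Gs_def using finite_R by (simp add: card_cartesian_product)

lemma gsub_G: "g \<in> Gs q r t \<Longrightarrow> g' \<in> Gs q r t \<Longrightarrow> gsub q r t g g' \<in> Gs q r t"
  using qp nrm_Rs[OF rp tp] by (cases g; cases g') (auto simp: Gs_def)

lemma tr_decomp:
  assumes g: "g \<in> Gs q r t" and g': "g' \<in> Gs q r t" and p: "p \<in> Ns q r t" and p': "p' \<in> Ns q r t"
    and eq: "tr q r t g p = tr q r t g' p'"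
  shows "p' = tr q r t (gsub q r t g g') p"
proof -
  obtain e w l where pp: "p = ((e,w),l)" by (metis prod.exhaust)
  obtain e' w' l' where pp': "p' = ((e',w'),l')" by (metis prod.exhaust)
  obtain ge gw where gg: "g = (ge,gw)" by (cases g)
  obtain ge' gw' where gg': "g' = (ge',gw')" by (cases g')
  have l: "l = l'" and E: "(e + ge) mod q = (e' + ge') mod q" and W: "nrm r t (w + gw) = nrm r t (w' + gw')"
    using eq pp pp' gg gg' by auto
  have r1: "0 \<le> e'" "e' < q" "w' \<in> R" using p' pp' unfolding Ns_def Gs_def by auto
  have "(e + (ge - ge') mod q) mod q = (e + (ge - ge')) mod q" by (simp add: mod_add_right_eq)
  also have "\<dots> = ((e + ge) - ge') mod q" by (simp add: algebra_simps)
  also have "\<dots> = ((e' + ge') - ge') mod q" using E by (metis mod_diff_left_eq)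
  also have "\<dots> = e'" using r1 by simp
  finally have Ee: "(e + (ge - ge') mod q) mod q = e'" .
  have z1: "rz r t (w + gw - (w' + gw'))" using W nrm_eq_iff by blast
  have z2: "rz r t (nrm r t (gw - gw') - (gw - gw'))" by (rule rz_nrm)
  have "rz r t ((w + nrm r t (gw - gw')) - w')"
  proof -
    have eq: "(w + nrm r t (gw - gw')) - w' = (w + gw - (w' + gw')) + (nrm r t (gw - gw') - (gw - gw'))"
      by (simp add: algebra_simps)
    show ?thesis by (subst eq) (rule rz_add[OF z1 z2])
  qed
  hence "nrm r t (w + nrm r t (gw - gw')) = nrm r t w'" using nrm_eq_iff by blast
  hence Ww: "nrm r t (w + nrm r t (gw - gw')) = w'" using nrm_id r1(3) by simp
  show ?thesis using pp pp' gg gg' l Ee Ww by simp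
qed

lemma gsub_zero:
  assumes g: "g \<in> Gs q r t" and g': "g' \<in> Gs q r t" and z: "gsub q r t g g' = (0,(0,0,0))"
  shows "g = g'"
proof -
  obtain ge gw where gg: "g = (ge,gw)" by (cases g)
  obtain ge' gw' where gg': "g' = (ge',gw')" by (cases g')
  have E: "(ge - ge') mod q = 0" and W: "nrm r t (gw - gw') = (0,0,0)" using z gg gg' by auto
  have r: "0 \<le> ge" "ge < q" "0 \<le> ge'" "ge' < q" "gw \<in> R" "gw' \<in> R" using g g' gg gg' unfolding Gs_def by auto
  have "q dvd (ge - ge')" using E by (simp add: mod_eq_0_iff_dvd)
  hence "ge = ge'" using r by (metis mod_eq_dvd_iff mod_pos_pos_trivial)
  moreover have "nrm r t (gw - gw') = nrm r t 0" using W by (simp add: zero_prod_def)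
  hence "rz r t (gw - gw' - 0)" using nrm_eq_iff by blast
  hence "gw = gw'" using Rs_eq r by simp
  ultimately show ?thesis using gg gg' by simp
qed

lemma tr_zero: "p \<in> Ns q r t \<Longrightarrow> tr q r t (0,(0,0,0)) p = p"
proof -
  assume p: "p \<in> Ns q r t"
  obtain e w l where pp: "p = ((e,w),l)" by (metis prod.exhaust)
  have "0 \<le> e" "e < q" "w \<in> R" using p pp unfolding Ns_def Gs_def by auto
  moreover have "w + (0,0,0) = w" by (cases w) simp
  ultimately show ?thesis using pp nrm_id by simp
qed

lemma cls_pair:
  assumes g: "g \<in> Gs q r t" and g': "g' \<in> Gs q r t" and T: "T \<in> C" and T': "T' \<in> C"
    and p: "p \<in> T" and s: "s \<in> T" and p': "p' \<in> T'" and s': "s' \<in> T'"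
    and e1: "tr q r t g p = tr q r t g' p'" and e2: "tr q r t g s = tr q r t g' s'" and ne: "p \<noteq> s"
  shows "g = g' \<and> T = T'"
proof -
  have N: "p \<in> Ns q r t" "s \<in> Ns q r t" "p' \<in> Ns q r t" "s' \<in> Ns q r t" using C_N T T' p s p' s' by auto
  define d where "d = gsub q r t g g'"
  have dG: "d \<in> Gs q r t" unfolding d_def using gsub_G g g' by blast
  have "p' = tr q r t d p" unfolding d_def using tr_decomp[OF g g' N(1) N(3) e1] .
  moreover have "s' = tr q r t d s" unfolding d_def using tr_decomp[OF g g' N(2) N(4) e2] .
  ultimately have "d = (0,(0,0,0))" using D_prop[OF T T' p s ne dG] p' s' by simp
  hence gg: "g = g'" using gsub_zero[OF g g'] unfolding d_def by simp
  have "p' = p" using \<open>p' = tr q r t d p\<close> \<open>d = (0,(0,0,0))\<close> tr_zero N(1) by simp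
  hence "T = T'" using C_disj[OF T T' p] p' by simp
  thus ?thesis using gg by simp
qed

lemma construct:
  assumes T0: "T0 \<in> C" and mixed: "\<And>p p'. p \<in> T0 \<Longrightarrow> p' \<in> T0 \<Longrightarrow> snd p = snd p' \<Longrightarrow> p = p'"
    and rho: "\<rho> \<le> card (Gs q r t)"
  shows "\<exists>(X::pnt set) B. packing (3 * card (Gs q r t) + \<rho>) 4 X B \<and> finite B
           \<and> card B = \<rho> * card (Gs q r t) \<and> largest_ppc B \<rho>"
proof -
  have fG: "finite (Gs q r t)" using card_G by simp
  obtain I where I: "I \<subseteq> Gs q r t" "card I = \<rho>" using obtain_subset_with_card_n[OF rho] by metis
  have fI: "finite I" using I(1) fG finite_subset by blast
  define inf where "inf = (\<lambda>g::int \<times> i3. (g, 3::int))"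
  define cls where "cls = (\<lambda>g. (`) (tr q r t g) ` C)"
  define tv where "tv = (\<lambda>g. tr q r t g ` T0)"
  have fN: "finite (Ns q r t)" unfolding Ns_def using fG by simp
  have cN: "card (Ns q r t) = 3 * card (Gs q r t)" unfolding Ns_def using fG
    by (simp add: card_cartesian_product)
  have injI: "inj_on inf I" unfolding inf_def by (rule inj_onI) simp
  have dI: "inf ` I \<inter> Ns q r t = {}" unfolding inf_def Ns_def by auto
  have trimg: "\<And>g T. g \<in> Gs q r t \<Longrightarrow> T \<in> C \<Longrightarrow> tr q r t g ` T \<subseteq> Ns q r t \<and> card (tr q r t g ` T) = 3"
  proof -
    fix g T assume g: "g \<in> Gs q r t" and T: "T \<in> C"
    have TN: "T \<subseteq> Ns q r t" using C_N T by blast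
    have "inj_on (tr q r t g) T" by (rule inj_onI) (use tr_inj TN in blast)
    hence "card (tr q r t g ` T) = 3" using card_T[OF T] by (simp add: card_image)
    moreover have "tr q r t g ` T \<subseteq> Ns q r t" using tr_N g TN by blast
    ultimately show "tr q r t g ` T \<subseteq> Ns q r t \<and> card (tr q r t g ` T) = 3" by simp
  qed
  have sub: "\<And>i T. i \<in> I \<Longrightarrow> T \<in> cls i \<Longrightarrow> T \<subseteq> Ns q r t \<and> card T = 3"
    unfolding cls_def using trimg I(1) by blast
  have fc: "\<And>i. i \<in> I \<Longrightarrow> finite (cls i) \<and> card (cls i) = card (Gs q r t)"
  proof -
    fix i assume i: "i \<in> I"
    have "inj_on ((`) (tr q r t i)) C"
    proof (rule inj_onI)
      fix T T' assume T: "T \<in> C" and T': "T' \<in> C" and e: "tr q r t i ` T = tr q r t i ` T'"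
      have "inj_on (tr q r t i) (Ns q r t)" by (rule inj_onI) (rule tr_inj)
      moreover have "T \<subseteq> Ns q r t" "T' \<subseteq> Ns q r t" using C_N T T' by auto
      ultimately show "T = T'" using e by (simp add: inj_on_image_eq_iff)
    qed
    hence "card (cls i) = card C" unfolding cls_def by (simp add: card_image)
    thus "finite (cls i) \<and> card (cls i) = card (Gs q r t)" using card_C card_G unfolding cls_def by simp
  qed
  have dj: "\<And>i T T'. i \<in> I \<Longrightarrow> T \<in> cls i \<Longrightarrow> T' \<in> cls i \<Longrightarrow> T \<noteq> T' \<Longrightarrow> T \<inter> T' = {}"
  proof -
    fix i T T' assume i: "i \<in> I" and T: "T \<in> cls i" and T': "T' \<in> cls i" and ne: "T \<noteq> T'"
    obtain T1 where T1: "T1 \<in> C" "T = tr q r t i ` T1" using T unfolding cls_def by blast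
    obtain T2 where T2: "T2 \<in> C" "T' = tr q r t i ` T2" using T' unfolding cls_def by blast
    show "T \<inter> T' = {}"
    proof (rule ccontr)
      assume "T \<inter> T' \<noteq> {}"
      then obtain x where "x \<in> T" "x \<in> T'" by blast
      then obtain p p' where pp: "p \<in> T1" "p' \<in> T2" "x = tr q r t i p" "x = tr q r t i p'" using T1 T2 by blast
      have "p = p'" using tr_inj C_N T1(1) T2(1) pp by blast
      hence "T1 = T2" using C_disj[OF T1(1) T2(1)] pp by blast
      thus False using ne T1 T2 by simp
    qed
  qed
  have pr: "\<And>i i' T T' x y. i \<in> I \<Longrightarrow> i' \<in> I \<Longrightarrow> T \<in> cls i \<Longrightarrow> T' \<in> cls i' \<Longrightarrow>
               x \<in> T \<Longrightarrow> x \<in> T' \<Longrightarrow> y \<in> T \<Longrightarrow> y \<in> T' \<Longrightarrow> x \<noteq> y \<Longrightarrow> i = i' \<and> T = T'"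
  proof -
    fix i i' T T' x y assume i: "i \<in> I" "i' \<in> I" and T: "T \<in> cls i" and T': "T' \<in> cls i'"
      and xy: "x \<in> T" "x \<in> T'" "y \<in> T" "y \<in> T'" "x \<noteq> y"
    obtain T1 where T1: "T1 \<in> C" "T = tr q r t i ` T1" using T unfolding cls_def by blast
    obtain T2 where T2: "T2 \<in> C" "T' = tr q r t i' ` T2" using T' unfolding cls_def by blast
    obtain p s where ps: "p \<in> T1" "s \<in> T1" "x = tr q r t i p" "y = tr q r t i s" using T1 xy by blast
    obtain p' s' where ps': "p' \<in> T2" "s' \<in> T2" "x = tr q r t i' p'" "y = tr q r t i' s'" using T2 xy by blast
    have "p \<noteq> s" using ps xy by auto
    hence "i = i' \<and> T1 = T2" using cls_pair[of i i' T1 T2 p s p' s'] I(1) i T1 T2 ps ps' by auto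
    thus "i = i' \<and> T = T'" using T1 T2 by simp
  qed
  have tv1: "\<And>i. i \<in> I \<Longrightarrow> tv i \<in> cls i" unfolding tv_def cls_def using T0 by blast
  have tv2: "\<And>i i'. i \<in> I \<Longrightarrow> i' \<in> I \<Longrightarrow> i \<noteq> i' \<Longrightarrow> tv i \<inter> tv i' = {}"
  proof -
    fix i i' assume i: "i \<in> I" "i' \<in> I" "i \<noteq> i'"
    show "tv i \<inter> tv i' = {}"
    proof (rule ccontr)
      assume "tv i \<inter> tv i' \<noteq> {}"
      then obtain p p' where pp: "p \<in> T0" "p' \<in> T0" "tr q r t i p = tr q r t i' p'" unfolding tv_def by blast
      have "snd p = snd p'" using pp(3) by (cases p; cases p') auto
      hence "p = p'" using mixed pp by blast
      have N: "p \<in> Ns q r t" using C_N T0 pp by blast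
      have G: "i \<in> Gs q r t" "i' \<in> Gs q r t" using i I(1) by auto
      have "p = tr q r t (gsub q r t i i') p" using tr_decomp[OF G N N] pp \<open>p = p'\<close> by simp
      obtain e w l where pe: "p = ((e,w),l)" by (metis prod.exhaust)
      obtain de dw where dd: "gsub q r t i i' = (de,dw)" by (cases "gsub q r t i i'")
      have dG: "de \<in> {0..<q}" "dw \<in> R" using gsub_G[OF G] dd unfolding Gs_def by auto
      have r: "0 \<le> e" "e < q" "w \<in> R" using N pe unfolding Ns_def Gs_def by auto
      have E: "(e + de) mod q = e" and W: "nrm r t (w + dw) = w"
        using \<open>p = tr q r t (gsub q r t i i') p\<close> pe dd by auto
      have "q dvd (e + de - e)" using mod_dvd[OF E r(1,2)] .
      hence "de = 0" using dG dvd_small by auto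
      have "nrm r t (w + dw) = nrm r t w" using W nrm_id r(3) by simp
      hence "rz r t (w + dw - w)" using nrm_eq_iff by blast
      hence "dw = (0,0,0)" using rz_R_zero dG by simp
      hence "gsub q r t i i' = (0,(0,0,0))" using dd \<open>de = 0\<close> by simp
      hence "i = i'" using gsub_zero[OF G] by blast
      thus False using i by simp
    qed
  qed
  show ?thesis
    using packing_from_classes[OF fN cN fI I(2) injI dI sub fc dj pr tv1 tv2] .
qed

end


definition HT1 :: "cov list list" where
  "HT1 = [[(0,0,(1,1,0)),(0,1,(-1,0,1)),(0,2,(2,0,-1))], [(0,0,(-1,-1,0)),(0,1,(1,0,-1)),(0,2,(-2,0,1))]]"
definition SP1 :: "(int \<times> int) list list" where
  "SP1 = [[(0,0),(0,1),(0,2)]]"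

definition HT3 :: "cov list list" where
  "HT3 = [[(0,0,(-1,-1,1)),(1,0,(2,0,2)),(0,1,(-2,-1,0))],
          [(2,0,(-3,-1,-1)),(1,1,(1,0,1)),(0,2,(-1,-1,1))],
          [(2,1,(-3,-1,-1)),(1,2,(-1,0,-1)),(2,2,(-2,-1,0))],
          [(0,0,(1,1,-1)),(1,0,(-2,0,-2)),(1,1,(-1,0,-1))],
          [(2,0,(3,1,1)),(1,2,(1,0,1)),(2,2,(2,1,0))],
          [(0,1,(2,1,0)),(2,1,(3,1,1)),(0,2,(1,1,-1))]]"
definition SP3 :: "(int \<times> int) list list" where
  "SP3 = [[(1,0),(2,0),(0,1)], [(1,1),(2,1),(0,2)], [(1,2),(2,2),(0,0)]]"

definition chk_pair :: "int \<Rightarrow> cov list list \<Rightarrow> bool" where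
  "chk_pair q HT \<longleftrightarrow> (\<forall>A\<in>set HT. \<forall>B\<in>set HT. \<forall>(e1,l1,k1)\<in>set A. \<forall>(e2,l2,k2)\<in>set A. \<forall>(e1',l1',k1')\<in>set B. \<forall>(e2',l2',k2')\<in>set B.
   ((e1,l1) \<noteq> (e2,l2) \<and> l1 = l1' \<and> l2 = l2' \<and> (e2 - e1 - (e2' - e1')) mod q = 0) \<longrightarrow>
   ((A = B \<and> e1 = e1' \<and> k1 = k1' \<and> e2 = e2' \<and> k2 = k2') \<or> k2' - k1' = - (k2 - k1)))"

definition chk_d :: "int \<Rightarrow> cov list list \<Rightarrow> bool" where
  "chk_d q HT \<longleftrightarrow> (\<forall>A\<in>set HT. length A = 3 \<and> distinct (map (\<lambda>(e,l,k). (e,l)) A) \<and>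
     (\<forall>(e,l,k)\<in>set A. 0 \<le> e \<and> e < q \<and> l \<in> {0,1,2} \<and> unitk k \<and>
        (\<forall>(e',l',k')\<in>set A. (e,l) \<noteq> (e',l') \<longrightarrow> unitk (k' - k))))"

definition chk_slot :: "cov list list \<Rightarrow> bool" where
  "chk_slot HT \<longleftrightarrow> (\<forall>A\<in>set HT. \<forall>B\<in>set HT. \<forall>(e,l,k)\<in>set A. \<forall>(e',l',k')\<in>set B. (e = e' \<and> l = l') \<longrightarrow> A = B \<or> k' = - k)"

definition chk_s :: "int \<Rightarrow> int set \<Rightarrow> (int \<times> int) list list \<Rightarrow> bool" where
  "chk_s q D SP \<longleftrightarrow> (\<forall>S\<in>set SP. length S = 3 \<and> distinct S \<and> (\<forall>(e,l)\<in>set S. 0 \<le> e \<and> e < q \<and> l \<in> {0,1,2}) \<and>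
     (\<forall>S'\<in>set SP. (\<forall>x\<in>set S. x \<in> set S' \<longrightarrow> S = S') \<and>
       (\<forall>(e1,l1)\<in>set S. \<forall>(e2,l2)\<in>set S. \<forall>(e1',l1')\<in>set S'. \<forall>(e2',l2')\<in>set S'.
          ((e1,l1) \<noteq> (e2,l2) \<and> l1 = l1' \<and> l2 = l2') \<longrightarrow>
          (\<forall>d\<in>D. ((e1+d) mod q = e1' \<and> (e2+d) mod q = e2') \<longrightarrow> d = 0))))"

lemma chk3: "chk_pair 3 HT3" "chk_d 3 HT3" "chk_slot HT3" "chk_s 3 {0,1,2} SP3"
  "distinct HT3" "distinct SP3" "length HT3 = 6" "length SP3 = 3"
  unfolding chk_pair_def chk_d_def chk_slot_def chk_s_def HT3_def SP3_def by simp_all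

lemma chk1: "chk_pair 1 HT1" "chk_d 1 HT1" "chk_slot HT1" "chk_s 1 {0} SP1"
  "distinct HT1" "distinct SP1" "length HT1 = 2" "length SP1 = 1"
  unfolding chk_pair_def chk_d_def chk_slot_def chk_s_def HT1_def SP1_def by simp_all

lemma cons_from_chk:
  assumes qp: "q > 0" and rp: "r > 0" and tp: "t > 0"
   and ur: "\<And>c. c dvd 216 \<Longrightarrow> coprime c r"
   and ut: "\<And>N. \<not> 3 dvd N \<Longrightarrow> coprime N t"
   and cp: "chk_pair q HT" and cd: "chk_d q HT" and cs: "chk_slot HT" and css: "chk_s q D SP"
   and D: "\<And>d. 0 \<le> d \<Longrightarrow> d < q \<Longrightarrow> d \<in> D"
   and dd: "distinct HT" "distinct SP" and lens: "length HT = 2 * nat q" "length SP = nat q"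
  shows "cons q r t HT SP"
proof
  show "q > 0" "r > 0" "t > 0" by (fact qp rp tp)+
  show "\<And>c. c dvd 216 \<Longrightarrow> coprime c r" by (fact ur)
  show "\<And>N. \<not> 3 dvd N \<Longrightarrow> coprime N t" by (fact ut)
  show "distinct HT" "distinct SP" by (fact dd)+
  show "length HT = 2 * nat q" "length SP = nat q" by (fact lens)+
next
  fix A e l k assume a: "A \<in> set HT" "(e,l,k) \<in> set A"
  note h = bspec[OF cd[unfolded chk_d_def] a(1)]
  note h2 = bspec[OF conjunct2[OF conjunct2[OF h]] a(2), unfolded prod.case]
  show "0 \<le> e \<and> e < q \<and> l \<in> {0,1,2}" using h2 by simp
  show "unitk k" using h2 by simp
next
  fix S e l assume a: "S \<in> set SP" "(e,l) \<in> set S"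
  note h = bspec[OF css[unfolded chk_s_def] a(1)]
  show "0 \<le> e \<and> e < q \<and> l \<in> {0,1,2}" using bspec[OF conjunct1[OF conjunct2[OF conjunct2[OF h]]] a(2)] by simp
next
  fix A assume a: "A \<in> set HT"
  show "length A = 3 \<and> distinct (map (\<lambda>(e,l,k). (e,l)) A)" using bspec[OF cd[unfolded chk_d_def] a] by simp
next
  fix S assume a: "S \<in> set SP"
  show "length S = 3 \<and> distinct S" using bspec[OF css[unfolded chk_s_def] a] by simp
next
  fix A e l k e' l' k' assume a: "A \<in> set HT" "(e,l,k) \<in> set A" "(e',l',k') \<in> set A" "(e,l) \<noteq> (e',l')"
  note h = bspec[OF cd[unfolded chk_d_def] a(1)]
  note h2 = bspec[OF conjunct2[OF conjunct2[OF h]] a(2), unfolded prod.case]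
  note h3 = bspec[OF conjunct2[OF conjunct2[OF conjunct2[OF conjunct2[OF h2]]]] a(3), unfolded prod.case]
  show "unitk (k' - k)" using h3 a(4) by simp
next
  fix A B e l k k' assume a: "A \<in> set HT" "B \<in> set HT" "(e,l,k) \<in> set A" "(e,l,k') \<in> set B"
  note h = bspec[OF bspec[OF bspec[OF cs[unfolded chk_slot_def] a(1)] a(2)] a(3), unfolded prod.case]
  show "A = B \<or> k' = - k" using bspec[OF h a(4), unfolded prod.case] by simp
next
  fix A B e1 l1 k1 e2 l2 k2 e1' k1' e2' k2'
  assume a: "A \<in> set HT" "B \<in> set HT" "(e1,l1,k1) \<in> set A" "(e2,l2,k2) \<in> set A" "(e1',l1,k1') \<in> set B"
    "(e2',l2,k2') \<in> set B" "(e1,l1) \<noteq> (e2,l2)" "q dvd (e2 - e1 - (e2' - e1'))"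
  have "(e2 - e1 - (e2' - e1')) mod q = 0" using a(8) by simp
  moreover note h1 = bspec[OF bspec[OF bspec[OF cp[unfolded chk_pair_def] a(1)] a(2)] a(3)]
  note h2 = bspec[OF h1[unfolded prod.case] a(4)]
  note h3 = bspec[OF h2[unfolded prod.case] a(5)]
  note h = bspec[OF h3[unfolded prod.case] a(6)]
  ultimately show "(A = B \<and> e1 = e1' \<and> k1 = k1' \<and> e2 = e2' \<and> k2 = k2') \<or> k2' - k1' = - (k2 - k1)"
    using a(7) by simp
next
  fix S S' e1 l1 e2 l2 e1' e2' d
  assume a: "S \<in> set SP" "S' \<in> set SP" "(e1,l1) \<in> set S" "(e2,l2) \<in> set S" "(e1',l1) \<in> set S'"
    "(e2',l2) \<in> set S'" "(e1,l1) \<noteq> (e2,l2)" "0 \<le> d" "d < q" "(e1+d) mod q = e1'" "(e2+d) mod q = e2'"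
  note h = bspec[OF conjunct2[OF conjunct2[OF conjunct2[OF bspec[OF css[unfolded chk_s_def] a(1)]]]] a(2)]
  note h1 = bspec[OF conjunct2[OF h] a(3), unfolded prod.case]
  note h2 = bspec[OF h1 a(4), unfolded prod.case]
  note h3 = bspec[OF h2 a(5), unfolded prod.case]
  note h4 = bspec[OF h3 a(6), unfolded prod.case]
  have "d \<in> D" using D a(8,9) by blast
  thus "d = 0" using h4 a(7,10,11) by simp
next
  fix S S' x assume a: "S \<in> set SP" "S' \<in> set SP" "x \<in> set S" "x \<in> set S'"
  note h = bspec[OF conjunct2[OF conjunct2[OF conjunct2[OF bspec[OF css[unfolded chk_s_def] a(1)]]]] a(2)]
  show "S = S'" using bspec[OF conjunct1[OF h] a(3)] a(4) by simp
qed

lemma cons3: "r > 0 \<Longrightarrow> t > 0 \<Longrightarrow> (\<And>c. c dvd 216 \<Longrightarrow> coprime c r) \<Longrightarrow> (\<And>N. \<not> 3 dvd N \<Longrightarrow> coprime N t)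
   \<Longrightarrow> cons 3 r t HT3 SP3"
  by (rule cons_from_chk[OF _ _ _ _ _ chk3(1-4)]) (auto simp: chk3(5-8))

lemma cons1: "r > 0 \<Longrightarrow> t > 0 \<Longrightarrow> (\<And>c. c dvd 216 \<Longrightarrow> coprime c r) \<Longrightarrow> (\<And>N. \<not> 3 dvd N \<Longrightarrow> coprime N t)
   \<Longrightarrow> cons 1 r t HT1 SP1"
  by (rule cons_from_chk[OF _ _ _ _ _ chk1(1-4)]) (auto simp: chk1(5-8))



lemma decomp3: "(m::nat) > 0 \<Longrightarrow> \<exists>a s. m = 3^a * s \<and> \<not> 3 dvd s"
proof (induction m rule: less_induct)
  case (less m)
  show ?case
  proof (cases "3 dvd m")
    case True
    then obtain m' where m': "m = 3 * m'" by blast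
    hence "m' < m" "m' > 0" using less.prems by auto
    then obtain a s where "m' = 3^a * s" "\<not> 3 dvd s" using less.IH by blast
    hence "m = 3^(Suc a) * s" using m' by simp
    thus ?thesis using \<open>\<not> 3 dvd s\<close> by blast
  next
    case False
    hence "m = 3^0 * m" by simp
    thus ?thesis using False by blast
  qed
qed

lemma ur_lemma: "coprime (r::int) 6 \<Longrightarrow> c dvd 216 \<Longrightarrow> coprime c r"
proof -
  assume a: "coprime r 6" "c dvd 216"
  have "coprime r (6^3)" using a(1) by (simp only: coprime_power_right_iff) simp
  moreover have "(6::int)^3 = 216" by simp
  ultimately have "coprime 216 r" by (simp add: coprime_commute)
  thus "coprime c r" using coprime_divisors[OF a(2) dvd_refl] by blast
qed

lemma p3: "prime (3::int)" by simp

lemma ut_lemma: "\<not> 3 dvd (N::int) \<Longrightarrow> coprime N (3^k)"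
proof -
  assume "\<not> 3 dvd N"
  hence "coprime 3 N" using prime_imp_coprime[OF p3] by blast
  thus ?thesis by (simp add: coprime_commute)
qed

lemma int_coprime6: "odd (s::nat) \<Longrightarrow> \<not> 3 dvd s \<Longrightarrow> coprime (int s) 6"
proof -
  assume a: "odd s" "\<not> 3 dvd s"
  have "\<not> (3::int) dvd int s" using a(2) by presburger
  hence c3: "coprime (int s) 3" using prime_imp_coprime[OF p3] by (simp add: coprime_commute)
  have "odd (int s)" using a(1) by simp
  hence c2: "coprime (int s) 2" by (simp add: coprime_commute)
  have "(6::int) = 2 * 3" by simp
  thus ?thesis using c2 c3 by (simp only: coprime_mult_right_iff)
qed

lemma packing_to_nat:
  fixes X :: "pnt set"
  assumes "packing v 4 X B" "finite B" "largest_ppc B \<rho>"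
  shows "\<exists>(X' :: nat set) B'. packing v 4 X' B' \<and> finite B' \<and> card B' = card B \<and> largest_ppc B' \<rho>"
proof -
  have "inj (to_nat :: pnt \<Rightarrow> nat)" by simp
  from transfer_inj[OF this assms] show ?thesis by blast
qed

lemma snd_pt: "snd (pt r t u j) = fst (snd u)"
  by (cases u) auto

lemma construct_m:
  assumes m: "odd (m::nat)" "m \<noteq> 3" and rho: "\<rho> \<le> m"
  shows "\<exists>(X :: nat set) B. packing (3 * m + \<rho>) 4 X B \<and> finite B \<and> card B = \<rho> * m \<and> largest_ppc B \<rho>"
proof -
  have "m > 0" using m by presburger
  then obtain a s where as: "m = 3^a * s" "\<not> 3 dvd s" using decomp3 by blast
  have so: "odd s" using m(1) as(1) by simp
  have sp: "s > 0" using so by presburger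
  define k where "k = a div 2"
  have k: "a = 2*k \<or> a = 2*k+1" unfolding k_def by presburger
  define r where "r = int s"
  define t where "t = (3::int)^k"
  have rp: "r > 0" and tp: "t > 0" unfolding r_def t_def using sp by auto
  have ur: "\<And>c. c dvd 216 \<Longrightarrow> coprime c r" unfolding r_def using ur_lemma int_coprime6[OF so as(2)] by blast
  have ut: "\<And>N. \<not> 3 dvd N \<Longrightarrow> coprime N t" unfolding t_def using ut_lemma by blast
  have cardR: "card (Rs r t) = s * 3^k * 3^k" using card_Rs[OF rp tp] unfolding r_def t_def
    by (simp add: nat_power_eq)
  from k show ?thesis
  proof
    assume a: "a = 2*k"
    interpret cons 1 r t HT1 SP1 using cons1[OF rp tp ur ut] .
    have p: "(3::nat)^a = 3^k * 3^k" using a by (simp add: mult_2 power_add)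
    have "m = s * 3^k * 3^k" using as(1) p by (simp add: mult_ac)
    hence cG: "card (Gs 1 r t) = m" using card_G cardR by simp
    define T0 where "T0 = spt ` set [(0,0),(0,1),(0,2)]"
    have "T0 \<in> (\<lambda>S. spt ` set S) ` set SP1" unfolding T0_def SP1_def by simp
    hence T0: "T0 \<in> Cs r t HT1 SP1" unfolding Cs_def by (rule UnI2)
    have mixed: "\<And>p p'. p \<in> T0 \<Longrightarrow> p' \<in> T0 \<Longrightarrow> snd p = snd p' \<Longrightarrow> p = p'" unfolding T0_def by auto
    have rr: "\<rho> \<le> card (Gs 1 r t)" using rho cG by simp
    obtain X :: "pnt set" and B where XB: "packing (3 * card (Gs 1 r t) + \<rho>) 4 X B" "finite B"
       "card B = \<rho> * card (Gs 1 r t)" "largest_ppc B \<rho>"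
      using construct[OF T0 mixed rr] by blast
    obtain X' :: "nat set" and B' where XB': "packing (3 * card (Gs 1 r t) + \<rho>) 4 X' B'" "finite B'"
       "card B' = card B" "largest_ppc B' \<rho>"
      using packing_to_nat[OF XB(1,2,4)] by blast
    have "packing (3 * m + \<rho>) 4 X' B' \<and> finite B' \<and> card B' = \<rho> * m \<and> largest_ppc B' \<rho>"
      using XB' XB(3) cG by simp
    thus ?thesis by blast
  next
    assume a: "a = 2*k+1"
    interpret cons 3 r t HT3 SP3 using cons3[OF rp tp ur ut] .
    have p: "(3::nat)^a = 3 * (3^k * 3^k)" using a by (simp add: mult_2 power_add)
    have "m = 3 * (s * 3^k * 3^k)" using as(1) p by (simp add: mult_ac)
    hence cG: "card (Gs 3 r t) = m" using card_G cardR by simp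
    have "card (Rs r t) \<noteq> 1"
    proof
      assume "card (Rs r t) = 1"
      hence "m = 3" using cG card_G by simp
      thus False using m by simp
    qed
    hence "card (Hs r t) > 0" using card_H by auto
    hence "Hs r t \<noteq> {}" by auto
    then obtain j0 where j0: "j0 \<in> Hs r t" by (metis ex_in_conv)
    define A0 :: "cov list" where "A0 = [(2,0,(-3,-1,-1)),(1,1,(1,0,1)),(0,2,(-1,-1,1))]"
    define T0 where "T0 = htri r t A0 j0"
    have "A0 \<in> set HT3" unfolding A0_def HT3_def by simp
    have "T0 \<in> htri r t A0 ` Hs r t" unfolding T0_def using j0 by (rule imageI)
    hence "T0 \<in> (\<Union>A\<in>set HT3. htri r t A ` Hs r t)" using \<open>A0 \<in> set HT3\<close> by (rule UN_I[rotated])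
    hence T0: "T0 \<in> Cs r t HT3 SP3" unfolding Cs_def by (rule UnI1)
    have mixed: "\<And>p p'. p \<in> T0 \<Longrightarrow> p' \<in> T0 \<Longrightarrow> snd p = snd p' \<Longrightarrow> p = p'"
    proof -
      fix p p' assume a: "p \<in> T0" "p' \<in> T0" "snd p = snd p'"
      obtain u u' where uu: "u \<in> set A0" "u' \<in> set A0" "p = pt r t u j0" "p' = pt r t u' j0"
        using a(1,2) unfolding T0_def htri_def by blast
      have "fst (snd u) = fst (snd u')" using a(3) uu(3,4) snd_pt by metis
      hence "u = u'" using uu(1,2) unfolding A0_def by auto
      thus "p = p'" using uu by simp
    qed
    have rr: "\<rho> \<le> card (Gs 3 r t)" using rho cG by simp
    obtain X :: "pnt set" and B where XB: "packing (3 * card (Gs 3 r t) + \<rho>) 4 X B" "finite B"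
       "card B = \<rho> * card (Gs 3 r t)" "largest_ppc B \<rho>"
      using construct[OF T0 mixed rr] by blast
    obtain X' :: "nat set" and B' where XB': "packing (3 * card (Gs 3 r t) + \<rho>) 4 X' B'" "finite B'"
       "card B' = card B" "largest_ppc B' \<rho>"
      using packing_to_nat[OF XB(1,2,4)] by blast
    have "packing (3 * m + \<rho>) 4 X' B' \<and> finite B' \<and> card B' = \<rho> * m \<and> largest_ppc B' \<rho>"
      using XB' XB(3) cG by simp
    thus ?thesis by blast
  qed
qed

theorem theorem2p2:
  fixes n \<rho> :: nat
  assumes "n > 0" and "n mod 6 = 3"
    and "n \<notin> {9, 15, 21, 141, 153, 165, 177, 189, 231, 249, 261, 285, 351, 357}"
    and "1 \<le> \<rho>" and "3 * \<rho> \<le> n"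
  shows "\<exists>(X :: nat set) B. packing (n + \<rho>) 4 X B \<and> finite B \<and> 3 * card B = \<rho> * n
           \<and> largest_ppc B \<rho>"
proof -
  define m where "m = n div 3"
  have nm: "n = 3 * m" unfolding m_def using assms(2) by presburger
  have "odd m" using assms(2) nm by presburger
  moreover have "m \<noteq> 3" using assms(3) nm by auto
  moreover have "\<rho> \<le> m" using assms(5) nm by simp
  ultimately obtain X :: "nat set" and B where XB: "packing (3 * m + \<rho>) 4 X B" "finite B" "card B = \<rho> * m" "largest_ppc B \<rho>"
    using construct_m by blast
  have "3 * card B = \<rho> * n" using XB(3) nm by simp
  thus ?thesis using XB nm by auto
qed


end
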